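(* Let $A\in\mathbb{R}^{n\times n}$, $B\in\mathbb{R}^{m\times m}$, $C:=\operatorname{diag}(A,B)$. Fix $k\in\{1,\dots,n+m\}$, let $r:=\binom{n+m}{k}$, $i_1:=\max\{0,k-n\}$, $i_2:=\min\{m,k\}$. For $i\in\{i_1,\dots,i_2\}$ let $\mu_i$ be the matrix measure induced by an $L_{p_i}$ vector norm $|\cdot|_{p_i}$ (the $p_i$ possibly different). Partition $x\in\mathbb{R}^r$ as $x=(x^{i_1},\dots,x^{i_2})$ with $x^i\in\mathbb{R}^{\binom{n}{k-i}\binom{m}{i}}$, let $|\cdot|_0$ be a monotonic norm on $\mathbb{R}^{i_2-i_1+1}$, and define the norm $|x|:=\big|\,(|x^{i_1}|_{p_{i_1}},\dots,|x^{i_2}|_{p_{i_2}})^T\big|_0$. Let $P\in\mathbb{R}^{r\times r}$ be a permutation matrix such that $C^{[k]}=P\,\operatorname{diag}_{i\in\{i_1,\dots,i_2\}}(A^{[k-i]}\oplus B^{[i]})\,P^{-1}$ (such $P$ exists), define the norm $|x|_P:=|P^{-1}x|$, and let $\mu_P$ be the matrix measure induced by $|\cdot|_P$. Then \[ \mu_P\big(C^{[k]}\big)=\max_{i\in\{i_1,\dots,i_2\}}\big\{\mu_i(A^{[k-i]})+\mu_i(B^{[i]})\big\}, \] and \[ \min_{i\in\{i_1,\dots,i_2\}}\big\{-\mu_i(-A^{[k-i]})-\mu_i(-B^{[i]})\big\}\le\mu_P\big(C^{[k]}\big). \]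
   Context: For $M\in\mathbb{R}^{p\times q}$, $M^{(k)}$ is the matrix of all $k\times k$ minors in lexicographic order; for square $M$, $M^{[k]}:=\frac{d}{dt}(\exp(Mt))^{(k)}|_{t=0}$, with $M^{(0)}:=1$, $M^{[0]}:=0$. Kronecker sum: $X\oplus Y:=X\otimes I_b+I_a\otimes Y$ for $X\in\mathbb{R}^{a\times a},Y\in\mathbb{R}^{b\times b}$. $\operatorname{diag}_{i\in\{i_1,\dots,i_2\}}(M_i)$ is block-diagonal with blocks $M_{i_1},\dots,M_{i_2}$ in order. A norm $|\cdot|_0$ on $\mathbb{R}^s$ is monotonic if $|u|_0\le|v|_0$ whenever $|u_j|\le|v_j|$ for all $j$. The matrix measure induced by a vector norm with induced matrix norm $\|\cdot\|$ is $\mu(M):=\lim_{\varepsilon\to0^+}(\|I+\varepsilon M\|-1)/\varepsilon$. *)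

theory Defs
  imports "Jordan_Normal_Form.Gauss_Jordan_Elimination" "Jordan_Normal_Form.Determinant"
    "HOL-Library.Extended_Real"
begin

text \<open>Strictly increasing index lists of length k with entries in [lo, hi), in lexicographic order.\<close>
fun ksubs_from :: "nat \<Rightarrow> nat \<Rightarrow> nat \<Rightarrow> nat list list" where
  "ksubs_from 0 lo hi = [[]]"
| "ksubs_from (Suc k) lo hi = concat (map (\<lambda>a. map ((#) a) (ksubs_from k (Suc a) hi)) [lo..<hi])"

definition ksubs :: "nat \<Rightarrow> nat \<Rightarrow> nat list list" where
  "ksubs k p = ksubs_from k 0 p"

text \<open>k-th multiplicative compound: matrix of all k x k minors, index sets in lexicographic order.\<close>
definition compound :: "nat \<Rightarrow> real mat \<Rightarrow> real mat" where
  "compound k M = mat (length (ksubs k (dim_row M))) (length (ksubs k (dim_col M)))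
     (\<lambda>(a, b). det (mat k k (\<lambda>(u, v). M $$ (ksubs k (dim_row M) ! a ! u, ksubs k (dim_col M) ! b ! v))))"

definition mexp :: "real mat \<Rightarrow> real mat" where
  "mexp M = mat (dim_row M) (dim_row M) (\<lambda>(i, j). \<Sum>l. (M ^\<^sub>m l) $$ (i, j) / fact l)"

text \<open>k-th additive compound: derivative at t = 0 of the k-th compound of exp(M t); M^[0] = 0.\<close>
definition add_compound :: "nat \<Rightarrow> real mat \<Rightarrow> real mat" where
  "add_compound k M = (if k = 0 then 0\<^sub>m 1 1 else
     mat (length (ksubs k (dim_row M))) (length (ksubs k (dim_row M)))
       (\<lambda>(a, b). (SOME D. ((\<lambda>t. compound k (mexp (t \<cdot>\<^sub>m M)) $$ (a, b)) has_real_derivative D) (at 0))))"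

definition kronecker :: "real mat \<Rightarrow> real mat \<Rightarrow> real mat" where
  "kronecker X Y = mat (dim_row X * dim_row Y) (dim_col X * dim_col Y)
     (\<lambda>(i, j). X $$ (i div dim_row Y, j div dim_col Y) * Y $$ (i mod dim_row Y, j mod dim_col Y))"

definition kron_sum :: "real mat \<Rightarrow> real mat \<Rightarrow> real mat" where
  "kron_sum X Y = kronecker X (1\<^sub>m (dim_row Y)) + kronecker (1\<^sub>m (dim_row X)) Y"

definition lp_norm :: "ereal \<Rightarrow> real vec \<Rightarrow> real" where
  "lp_norm p x = (if p = \<infinity> then Max (insert 0 {\<bar>x $ j\<bar> | j. j < dim_vec x})
     else (\<Sum>j<dim_vec x. \<bar>x $ j\<bar> powr real_of_ereal p) powr (1 / real_of_ereal p))"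

definition is_vec_norm :: "nat \<Rightarrow> (real vec \<Rightarrow> real) \<Rightarrow> bool" where
  "is_vec_norm s N \<longleftrightarrow>
     (\<forall>x\<in>carrier_vec s. 0 \<le> N x \<and> (N x = 0 \<longleftrightarrow> x = 0\<^sub>v s)) \<and>
     (\<forall>x\<in>carrier_vec s. \<forall>c. N (c \<cdot>\<^sub>v x) = \<bar>c\<bar> * N x) \<and>
     (\<forall>x\<in>carrier_vec s. \<forall>y\<in>carrier_vec s. N (x + y) \<le> N x + N y)"

definition monotonic_norm :: "nat \<Rightarrow> (real vec \<Rightarrow> real) \<Rightarrow> bool" where
  "monotonic_norm s N \<longleftrightarrow> is_vec_norm s N \<and>
     (\<forall>u\<in>carrier_vec s. \<forall>v\<in>carrier_vec s. (\<forall>j<s. \<bar>u $ j\<bar> \<le> \<bar>v $ j\<bar>) \<longrightarrow> N u \<le> N v)"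

definition induced_norm :: "(real vec \<Rightarrow> real) \<Rightarrow> nat \<Rightarrow> real mat \<Rightarrow> real" where
  "induced_norm N s M = Sup {N (M *\<^sub>v x) / N x | x. x \<in> carrier_vec s \<and> x \<noteq> 0\<^sub>v s}"

definition matrix_measure :: "(real vec \<Rightarrow> real) \<Rightarrow> nat \<Rightarrow> real mat \<Rightarrow> real" where
  "matrix_measure N s M = Lim (at_right 0) (\<lambda>\<epsilon>. (induced_norm N s (1\<^sub>m s + \<epsilon> \<cdot>\<^sub>m M) - 1) / \<epsilon>)"

definition permutation_mat :: "nat \<Rightarrow> real mat \<Rightarrow> bool" where
  "permutation_mat r P \<longleftrightarrow> (\<exists>\<sigma>. \<sigma> permutes {..<r} \<and>
     P = mat r r (\<lambda>(i, j). if i = \<sigma> j then 1 else 0))"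

definition mat_inv :: "real mat \<Rightarrow> real mat" where
  "mat_inv P = the (mat_inverse P)"

definition vec_block :: "(nat \<Rightarrow> nat) \<Rightarrow> nat \<Rightarrow> nat \<Rightarrow> real vec \<Rightarrow> real vec" where
  "vec_block d i1 i x = vec (d i) (\<lambda>t. x $ ((\<Sum>j\<in>{i1..<i}. d j) + t))"

end

theory Submission
  imports Defs "HOL-Analysis.Convex"
begin

lemma ereal_ge1_cases:
  assumes "1 \<le> (p::ereal)"
  obtains "p = \<infinity>" | q where "p = ereal q" "1 \<le> q"
  using assms by (cases p) auto

lemma lp_inf: "lp_norm \<infinity> x = Max (insert 0 ((\<lambda>j. \<bar>x $ j\<bar>) ` {..<dim_vec x}))"
  unfolding lp_norm_def by (simp add: image_def setcompr_eq_image, metis lessThan_iff)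

lemma lp_fin: "lp_norm (ereal q) x = (\<Sum>j<dim_vec x. \<bar>x $ j\<bar> powr q) powr (1 / q)"
  unfolding lp_norm_def by simp

lemma lp_cong_abs:
  assumes "dim_vec x = dim_vec y" "\<And>j. j < dim_vec x \<Longrightarrow> \<bar>x $ j\<bar> = \<bar>y $ j\<bar>"
  shows "lp_norm p x = lp_norm p y"
proof -
  have "(\<lambda>j. \<bar>x $ j\<bar>) ` {..<dim_vec x} = (\<lambda>j. \<bar>y $ j\<bar>) ` {..<dim_vec y}"
    using assms by (intro image_cong) auto
  moreover have "(\<Sum>j<dim_vec x. \<bar>x $ j\<bar> powr real_of_ereal p) = (\<Sum>j<dim_vec y. \<bar>y $ j\<bar> powr real_of_ereal p)"
    using assms by (intro sum.cong) auto
  ultimately show ?thesis unfolding lp_norm_def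
    by (simp add: setcompr_eq_image[of "\<lambda>j. \<bar>x $ j\<bar>" "\<lambda>j. j < dim_vec x", unfolded lessThan_def[symmetric]]
        setcompr_eq_image[of "\<lambda>j. \<bar>y $ j\<bar>" "\<lambda>j. j < dim_vec y", unfolded lessThan_def[symmetric]])
qed

lemma lp_nonneg: "1 \<le> p \<Longrightarrow> 0 \<le> lp_norm p x"
proof (erule ereal_ge1_cases)
  assume "p = \<infinity>" then show ?thesis by (simp add: lp_inf Max_ge_iff)
next
  fix q assume "p = ereal q" "1 \<le> q" then show ?thesis by (simp add: lp_fin)
qed

lemma lp_comp_le: assumes "1 \<le> p" "j < dim_vec x" shows "\<bar>x $ j\<bar> \<le> lp_norm p x"
  using assms(1)
proof (rule ereal_ge1_cases)
  assume "p = \<infinity>" then show ?thesis using assms by (simp add: lp_inf Max_ge_iff)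
next
  fix q assume q: "p = ereal q" "1 \<le> q"
  have "\<bar>x $ j\<bar> = (\<bar>x $ j\<bar> powr q) powr (1/q)" using q by (simp add: powr_powr)
  also have "\<dots> \<le> (\<Sum>j<dim_vec x. \<bar>x $ j\<bar> powr q) powr (1 / q)"
    using q assms by (intro powr_mono2 member_le_sum) auto
  finally show ?thesis using q by (simp add: lp_fin)
qed

lemma lp_zero_vec: "1 \<le> p \<Longrightarrow> lp_norm p (0\<^sub>v s) = 0"
proof (erule ereal_ge1_cases)
  assume "p = \<infinity>" then show ?thesis by (simp add: lp_inf image_constant_conv)
next
  fix q assume "p = ereal q" "1 \<le> q" then show ?thesis by (simp add: lp_fin)
qed

lemma lp_zero_iff: assumes "1 \<le> p" shows "lp_norm p x = 0 \<longleftrightarrow> x = 0\<^sub>v (dim_vec x)"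
proof
  assume "lp_norm p x = 0"
  then have "\<And>j. j < dim_vec x \<Longrightarrow> x $ j = 0" using lp_comp_le[OF assms] by (metis abs_le_zero_iff)
  then show "x = 0\<^sub>v (dim_vec x)" by (intro eq_vecI) auto
next
  assume "x = 0\<^sub>v (dim_vec x)" then show "lp_norm p x = 0" using lp_zero_vec[OF assms] by metis
qed

lemma lp_mono:
  assumes "1 \<le> p" "dim_vec x = dim_vec y" "\<And>j. j < dim_vec x \<Longrightarrow> \<bar>x $ j\<bar> \<le> \<bar>y $ j\<bar>"
  shows "lp_norm p x \<le> lp_norm p y"
  using assms(1)
proof (rule ereal_ge1_cases)
  assume p: "p = \<infinity>"
  have "Max (insert 0 ((\<lambda>j. \<bar>x $ j\<bar>) ` {..<dim_vec x})) \<le> Max (insert 0 ((\<lambda>j. \<bar>y $ j\<bar>) ` {..<dim_vec y}))"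
  proof (rule Max.boundedI)
    fix a assume "a \<in> insert 0 ((\<lambda>j. \<bar>x $ j\<bar>) ` {..<dim_vec x})"
    then show "a \<le> Max (insert 0 ((\<lambda>j. \<bar>y $ j\<bar>) ` {..<dim_vec y}))"
      using assms(2,3) by (force simp: Max_ge_iff)
  qed auto
  then show ?thesis using p by (simp add: lp_inf)
next
  fix q assume q: "p = ereal q" "1 \<le> q"
  have "(\<Sum>j<dim_vec x. \<bar>x $ j\<bar> powr q) \<le> (\<Sum>j<dim_vec y. \<bar>y $ j\<bar> powr q)"
    using assms q by (auto intro!: sum_mono powr_mono2)
  then show ?thesis by (simp only: q(1) lp_fin) (rule powr_mono2, use q in \<open>auto intro!: sum_nonneg\<close>)
qed

lemma lp_homog: assumes "1 \<le> p" shows "lp_norm p (c \<cdot>\<^sub>v x) = \<bar>c\<bar> * lp_norm p x"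
  using assms
proof (rule ereal_ge1_cases)
  assume p: "p = \<infinity>"
  have "mono (\<lambda>t. \<bar>c\<bar> * t)" by (simp add: mono_def mult_left_mono)
  then have "\<bar>c\<bar> * Max (insert 0 ((\<lambda>j. \<bar>x $ j\<bar>) ` {..<dim_vec x}))
      = Max ((\<lambda>t. \<bar>c\<bar> * t) ` (insert 0 ((\<lambda>j. \<bar>x $ j\<bar>) ` {..<dim_vec x})))"
    by (rule mono_Max_commute) auto
  also have "\<dots> = Max (insert 0 ((\<lambda>j. \<bar>(c \<cdot>\<^sub>v x) $ j\<bar>) ` {..<dim_vec (c \<cdot>\<^sub>v x)}))"
    by (simp add: image_image abs_mult)
  finally show ?thesis using p by (simp add: lp_inf)
next
  fix q assume q: "p = ereal q" "1 \<le> q"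
  have "(\<Sum>j<dim_vec (c \<cdot>\<^sub>v x). \<bar>(c \<cdot>\<^sub>v x) $ j\<bar> powr q) = \<bar>c\<bar> powr q * (\<Sum>j<dim_vec x. \<bar>x $ j\<bar> powr q)"
    by (simp add: abs_mult powr_mult sum_distrib_left)
  then show ?thesis using q
    by (simp add: lp_fin powr_mult powr_powr sum_nonneg)
qed

lemma conv_pw:
  fixes u v l q :: real
  assumes "0 \<le> u" "0 \<le> v" "0 \<le> l" "l \<le> 1" "1 \<le> q"
  shows "(l * u + (1 - l) * v) powr q \<le> l * u powr q + (1 - l) * v powr q"
proof -
  have pl: "\<And>t::real. 0 \<le> t \<Longrightarrow> t \<le> 1 \<Longrightarrow> t powr q \<le> t"
  proof -
    fix t :: real assume "0 \<le> t" "t \<le> 1"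
    then show "t powr q \<le> t" using powr_le_one_le[of t q] assms(5) by (cases "t = 0") auto
  qed
  show ?thesis
  proof (cases "u = 0")
    case True
    have "((1 - l) * v) powr q = (1 - l) powr q * v powr q" using assms by (simp add: powr_mult)
    also have "\<dots> \<le> (1 - l) * v powr q" using assms pl[of "1 - l"] by (intro mult_right_mono) auto
    finally show ?thesis using True assms by simp
  next
    case u: False
    show ?thesis
    proof (cases "v = 0")
      case True
      have "(l * u) powr q = l powr q * u powr q" using assms by (simp add: powr_mult)
      also have "\<dots> \<le> l * u powr q" using assms pl[of l] by (intro mult_right_mono) auto
      finally show ?thesis using True assms by simp
    next
      case False
      have "(\<lambda>x. x powr q) ((1 - (1 - l)) *\<^sub>R u + (1 - l) *\<^sub>R v) \<le> (1 - (1 - l)) * (\<lambda>x. x powr q) u + (1 - l) * (\<lambda>x. x powr q) v"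
        using convex_onD[OF powr_convex[OF assms(5)], of "1 - l" u v] assms u False by auto
      then show ?thesis by simp
    qed
  qed
qed

lemma lp_inf_le: assumes "0 \<le> c" "\<And>j. j < dim_vec x \<Longrightarrow> \<bar>x $ j\<bar> \<le> c" shows "lp_norm \<infinity> x \<le> c"
  unfolding lp_inf using assms by (intro Max.boundedI) auto

lemma powr_inv_powr: assumes "0 \<le> S" "1 \<le> (q::real)" shows "(S powr (1/q)) powr q = S"
  using assms by (simp add: powr_powr)

lemma minkowski:
  assumes q: "1 \<le> q" and d: "dim_vec y = dim_vec x"
  shows "lp_norm (ereal q) (x + y) \<le> lp_norm (ereal q) x + lp_norm (ereal q) y"
proof -
  let ?d = "dim_vec x"
  define al where "al = lp_norm (ereal q) x"
  define be where "be = lp_norm (ereal q) y"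
  have al0: "0 \<le> al" "0 \<le> be" unfolding al_def be_def using lp_nonneg q by auto
  have alq: "al powr q = (\<Sum>j<?d. \<bar>x $ j\<bar> powr q)" unfolding al_def lp_fin
    using q by (intro powr_inv_powr) (auto intro: sum_nonneg)
  have beq: "be powr q = (\<Sum>j<?d. \<bar>y $ j\<bar> powr q)" unfolding be_def lp_fin
    using q by (simp only: d) (intro powr_inv_powr, auto intro: sum_nonneg)
  show ?thesis
  proof (cases "al = 0")
    case True
    then have "\<And>j. j < ?d \<Longrightarrow> x $ j = 0" using lp_comp_le[of "ereal q" _ x] q unfolding al_def by fastforce
    then have "x + y = y" using d by (intro eq_vecI) auto
    then show ?thesis using True unfolding al_def be_def by simp
  next
    case alnz: False
    show ?thesis
    proof (cases "be = 0")
      case True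
      then have "\<And>j. j < ?d \<Longrightarrow> y $ j = 0" using lp_comp_le[of "ereal q" _ y] q d unfolding be_def by fastforce
      then have "x + y = x" using d by (intro eq_vecI) auto
      then show ?thesis using True unfolding al_def be_def by simp
    next
      case benz: False
      have alp: "0 < al" "0 < be" using al0 alnz benz by auto
      define l where "l = al / (al + be)"
      have l: "0 \<le> l" "l \<le> 1" "1 - l = be / (al + be)" using alp unfolding l_def by (auto simp: field_simps)
      have pw: "\<bar>(x + y) $ j\<bar> powr q \<le> (al + be) powr q * (l * ((\<bar>x $ j\<bar> / al) powr q) + (1 - l) * ((\<bar>y $ j\<bar> / be) powr q))"
        if j: "j < ?d" for j
      proof -
        have "\<bar>(x + y) $ j\<bar> \<le> \<bar>x $ j\<bar> + \<bar>y $ j\<bar>" using j d by auto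
        also have "\<dots> = (al + be) * (l * (\<bar>x $ j\<bar> / al) + (1 - l) * (\<bar>y $ j\<bar> / be))"
        proof -
          have e1: "(al + be) * l = al" "(al + be) * (1 - l) = be" using alp unfolding l(3) unfolding l_def by auto
          have "(al + be) * (l * (\<bar>x $ j\<bar> / al) + (1 - l) * (\<bar>y $ j\<bar> / be))
             = ((al + be) * l) * (\<bar>x $ j\<bar> / al) + ((al + be) * (1 - l)) * (\<bar>y $ j\<bar> / be)"
            by (simp only: distrib_left mult.assoc)
          also have "\<dots> = \<bar>x $ j\<bar> + \<bar>y $ j\<bar>" unfolding e1 using alp by simp
          finally show ?thesis by simp
        qed
        finally have "\<bar>(x + y) $ j\<bar> powr q \<le> ((al + be) * (l * (\<bar>x $ j\<bar> / al) + (1 - l) * (\<bar>y $ j\<bar> / be))) powr q"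
          using q by (intro powr_mono2) auto
        also have "\<dots> = (al + be) powr q * (l * (\<bar>x $ j\<bar> / al) + (1 - l) * (\<bar>y $ j\<bar> / be)) powr q"
          using alp l by (auto intro!: powr_mult add_nonneg_nonneg)
        also have "\<dots> \<le> (al + be) powr q * (l * ((\<bar>x $ j\<bar> / al) powr q) + (1 - l) * ((\<bar>y $ j\<bar> / be) powr q))"
          using alp l q by (intro mult_left_mono conv_pw) auto
        finally show ?thesis .
      qed
      have "(\<Sum>j<?d. \<bar>(x + y) $ j\<bar> powr q) \<le> (\<Sum>j<?d. (al + be) powr q * (l * ((\<bar>x $ j\<bar> / al) powr q) + (1 - l) * ((\<bar>y $ j\<bar> / be) powr q)))"
        using pw by (intro sum_mono) auto
      also have "\<dots> = (al + be) powr q * (l * ((\<Sum>j<?d. \<bar>x $ j\<bar> powr q) / al powr q) + (1 - l) * ((\<Sum>j<?d. \<bar>y $ j\<bar> powr q) / be powr q))"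
        using alp by (simp add: sum_distrib_left sum_distrib_right sum.distrib powr_divide sum_divide_distrib algebra_simps)
      also have "\<dots> = (al + be) powr q" using alp by (simp add: alq[symmetric] beq[symmetric])
      finally have S: "(\<Sum>j<?d. \<bar>(x + y) $ j\<bar> powr q) \<le> (al + be) powr q" .
      have "lp_norm (ereal q) (x + y) = (\<Sum>j<?d. \<bar>(x + y) $ j\<bar> powr q) powr (1/q)"
        using d by (simp add: lp_fin)
      also have "\<dots> \<le> ((al + be) powr q) powr (1/q)" using S q by (intro powr_mono2) (auto intro: sum_nonneg)
      also have "\<dots> = al + be" using alp q by (simp add: powr_powr)
      finally show ?thesis unfolding al_def be_def .
    qed
  qed
qed

lemma lp_triangle:
  assumes p: "1 \<le> p" and d: "dim_vec y = dim_vec x"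
  shows "lp_norm p (x + y) \<le> lp_norm p x + lp_norm p y"
  using p
proof (rule ereal_ge1_cases)
  assume pi: "p = \<infinity>"
  show ?thesis unfolding pi
  proof (rule lp_inf_le)
    show "0 \<le> lp_norm \<infinity> x + lp_norm \<infinity> y" using lp_nonneg[of \<infinity>] by (simp add: add_nonneg_nonneg)
    fix j assume "j < dim_vec (x + y)"
    then have "\<bar>(x + y) $ j\<bar> \<le> \<bar>x $ j\<bar> + \<bar>y $ j\<bar>" "j < dim_vec x" "j < dim_vec y" using d by auto
    then show "\<bar>(x + y) $ j\<bar> \<le> lp_norm \<infinity> x + lp_norm \<infinity> y"
      using lp_comp_le[of \<infinity> j x] lp_comp_le[of \<infinity> j y] by simp
  qed
next
  fix q assume "p = ereal q" "1 \<le> q" then show ?thesis using minkowski d by simp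
qed

lemma lp_le_sum:
  assumes p: "1 \<le> p"
  shows "lp_norm p x \<le> lp_norm p (vec (dim_vec x) (\<lambda>_. 1)) * (\<Sum>j<dim_vec x. \<bar>x $ j\<bar>)"
proof -
  let ?S = "\<Sum>j<dim_vec x. \<bar>x $ j\<bar>"
  have "lp_norm p x \<le> lp_norm p (?S \<cdot>\<^sub>v vec (dim_vec x) (\<lambda>_. 1))"
    using p by (intro lp_mono) (auto intro: member_le_sum)
  also have "\<dots> = ?S * lp_norm p (vec (dim_vec x) (\<lambda>_. 1))" using lp_homog[OF p] by (simp add: sum_nonneg)
  finally show ?thesis by (simp add: mult.commute)
qed

lemma sum_split_prod: "(\<Sum>j<a*b. g j) = (\<Sum>i<a. \<Sum>t<b. g (i*b+t::nat))"
proof (induction a)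
  case (Suc a)
  have "{..<Suc a * b} = {..<a*b} \<union> {a*b..<a*b+b}" by auto
  then have "(\<Sum>j<Suc a*b. g j) = (\<Sum>j<a*b. g j) + (\<Sum>j\<in>{a*b..<a*b+b}. g j)"
    by (simp add: sum.union_disjoint ivl_disj_int)
  also have "(\<Sum>j\<in>{a*b..<a*b+b}. g j) = (\<Sum>t<b. g (a*b+t))"
    by (rule sum.reindex_bij_witness[of _ "\<lambda>t. a*b+t" "\<lambda>j. j - a*b"]) auto
  finally show ?case using Suc by simp
qed simp

lemma idx_lt: assumes "i < a" "t < b" shows "i * b + t < a * (b::nat)"
proof -
  have "Suc i * b \<le> a * b" using assms by (intro mult_le_mono1) auto
  then show ?thesis using assms by simp
qed


lemma mv_entry: fixes A :: "real mat" assumes "A \<in> carrier_mat r c" "x \<in> carrier_vec c" "i < r"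
  shows "(A *\<^sub>v x) $ i = (\<Sum>j<c. A $$ (i, j) * x $ j)"
  using assms by (simp add: scalar_prod_def lessThan_atLeast0)

lemma Tv: fixes M :: "real mat" assumes "M \<in> carrier_mat s s" "x \<in> carrier_vec s"
  shows "(1\<^sub>m s + e \<cdot>\<^sub>m M) *\<^sub>v x = x + e \<cdot>\<^sub>v (M *\<^sub>v x)"
proof (rule eq_vecI)
  fix i assume "i < dim_vec (x + e \<cdot>\<^sub>v (M *\<^sub>v x))"
  then have i: "i < s" using assms by simp
  have "((1\<^sub>m s + e \<cdot>\<^sub>m M) *\<^sub>v x) $ i = (\<Sum>j<s. (1\<^sub>m s + e \<cdot>\<^sub>m M) $$ (i, j) * x $ j)"
    using assms i by (intro mv_entry) auto
  also have "\<dots> = (\<Sum>j<s. (if i = j then 1 else 0) * x $ j) + e * (\<Sum>j<s. M $$ (i, j) * x $ j)"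
    using assms i by (simp add: sum.distrib sum_distrib_left algebra_simps)
  also have "\<dots> = x $ i + e * (\<Sum>j<s. M $$ (i, j) * x $ j)"
  proof -
    have "(\<Sum>j<s. (if i = j then 1 else 0) * x $ j) = (\<Sum>j<s. if i = j then x $ j else 0)"
      by (intro sum.cong) auto
    also have "\<dots> = x $ i" using i by (simp add: sum.delta)
    finally show ?thesis by simp
  qed
  finally show "((1\<^sub>m s + e \<cdot>\<^sub>m M) *\<^sub>v x) $ i = (x + e \<cdot>\<^sub>v (M *\<^sub>v x)) $ i"
    using assms i mv_entry[OF assms i] by simp
qed (use assms in auto)

locale vnorm =
  fixes s :: nat and N :: "real vec \<Rightarrow> real"
  assumes s_pos: "0 < s"
    and nonneg: "x \<in> carrier_vec s \<Longrightarrow> 0 \<le> N x"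
    and zero: "x \<in> carrier_vec s \<Longrightarrow> N x = 0 \<Longrightarrow> x = 0\<^sub>v s"
    and homog: "x \<in> carrier_vec s \<Longrightarrow> N (c \<cdot>\<^sub>v x) = \<bar>c\<bar> * N x"
    and tri: "x \<in> carrier_vec s \<Longrightarrow> y \<in> carrier_vec s \<Longrightarrow> N (x + y) \<le> N x + N y"
    and lower: "\<exists>c. \<forall>x\<in>carrier_vec s. \<forall>j<s. \<bar>x $ j\<bar> \<le> c * N x"
    and upper: "\<exists>C. \<forall>x\<in>carrier_vec s. N x \<le> C * (\<Sum>j<s. \<bar>x $ j\<bar>)"
begin

lemma N0: "N (0\<^sub>v s) = 0"
proof -
  have "N (0 \<cdot>\<^sub>v unit_vec s 0) = 0" using homog[of "unit_vec s 0" 0] by simp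
  moreover have "0 \<cdot>\<^sub>v (unit_vec s 0 :: real vec) = 0\<^sub>v s" by (intro eq_vecI) auto
  ultimately show ?thesis by simp
qed

lemma pos: "x \<in> carrier_vec s \<Longrightarrow> x \<noteq> 0\<^sub>v s \<Longrightarrow> 0 < N x"
  using nonneg zero by (metis order_le_less)

lemma bound: assumes M: "M \<in> carrier_mat s s"
  shows "\<exists>K\<ge>0. \<forall>x\<in>carrier_vec s. N (M *\<^sub>v x) \<le> K * N x"
proof -
  obtain c where c: "\<forall>x\<in>carrier_vec s. \<forall>j<s. \<bar>x $ j\<bar> \<le> c * N x" using lower by blast
  obtain C where C: "\<forall>x\<in>carrier_vec s. N x \<le> C * (\<Sum>j<s. \<bar>x $ j\<bar>)" using upper by blast
  define S where "S = (\<Sum>i<s. \<Sum>j<s. \<bar>M $$ (i, j)\<bar>)"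
  have S0: "0 \<le> S" unfolding S_def by (intro sum_nonneg) auto
  show ?thesis
  proof (intro exI[of _ "\<bar>C\<bar> * (S * \<bar>c\<bar>)"] conjI ballI)
    show "0 \<le> \<bar>C\<bar> * (S * \<bar>c\<bar>)" using S0 by simp
    fix x :: "real vec" assume x: "x \<in> carrier_vec s"
    have cx: "\<bar>x $ j\<bar> \<le> \<bar>c\<bar> * N x" if "j < s" for j
      using c x that nonneg[OF x] by (meson abs_ge_self mult_right_mono order_trans)
    have ent: "\<bar>(M *\<^sub>v x) $ i\<bar> \<le> (\<Sum>j<s. \<bar>M $$ (i, j)\<bar>) * (\<bar>c\<bar> * N x)" if i: "i < s" for i
    proof -
      have "\<bar>(M *\<^sub>v x) $ i\<bar> = \<bar>\<Sum>j<s. M $$ (i, j) * x $ j\<bar>" using mv_entry[OF M x i] by simp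
      also have "\<dots> \<le> (\<Sum>j<s. \<bar>M $$ (i, j)\<bar> * \<bar>x $ j\<bar>)" by (rule order_trans[OF sum_abs]) (simp add: abs_mult)
      also have "\<dots> \<le> (\<Sum>j<s. \<bar>M $$ (i, j)\<bar> * (\<bar>c\<bar> * N x))" using cx by (intro sum_mono mult_left_mono) auto
      finally show ?thesis by (simp add: sum_distrib_right)
    qed
    have "N (M *\<^sub>v x) \<le> C * (\<Sum>i<s. \<bar>(M *\<^sub>v x) $ i\<bar>)" using C mult_mat_vec_carrier[OF M x] by blast
    also have "\<dots> \<le> \<bar>C\<bar> * (\<Sum>i<s. \<bar>(M *\<^sub>v x) $ i\<bar>)" by (intro mult_right_mono) (auto intro: sum_nonneg)
    also have "\<dots> \<le> \<bar>C\<bar> * (\<Sum>i<s. (\<Sum>j<s. \<bar>M $$ (i, j)\<bar>) * (\<bar>c\<bar> * N x))"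
      using ent by (intro mult_left_mono sum_mono) auto
    also have "\<dots> = \<bar>C\<bar> * (S * (\<bar>c\<bar> * N x))" unfolding S_def by (simp only: sum_distrib_right[symmetric])
    also have "\<dots> = \<bar>C\<bar> * (S * \<bar>c\<bar>) * N x" by (simp add: mult.assoc)
    finally show "N (M *\<^sub>v x) \<le> \<bar>C\<bar> * (S * \<bar>c\<bar>) * N x" .
  qed
qed

definition R :: "real mat \<Rightarrow> real set" where
  "R M = {N (M *\<^sub>v x) / N x | x. x \<in> carrier_vec s \<and> x \<noteq> 0\<^sub>v s}"

lemma ind_R: "induced_norm N s M = Sup (R M)" unfolding induced_norm_def R_def by simp

lemma e0: "unit_vec s 0 \<in> carrier_vec s" "unit_vec s 0 \<noteq> (0\<^sub>v s :: real vec)"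
  using s_pos by (auto simp: unit_vec_eq)

lemma R_ne: "R M \<noteq> {}" unfolding R_def using e0 by blast

lemma R_bdd: assumes "M \<in> carrier_mat s s" shows "bdd_above (R M)"
proof -
  obtain K where K: "\<forall>x\<in>carrier_vec s. N (M *\<^sub>v x) \<le> K * N x" using bound[OF assms] by blast
  have "r \<le> K" if "r \<in> R M" for r
  proof -
    obtain x where x: "x \<in> carrier_vec s" "x \<noteq> 0\<^sub>v s" "r = N (M *\<^sub>v x) / N x" using \<open>r \<in> R M\<close> unfolding R_def by blast
    then show ?thesis using K pos[OF x(1,2)] by (simp add: divide_le_eq)
  qed
  then show ?thesis by (intro bdd_aboveI)
qed

lemma ind_ratio: assumes "M \<in> carrier_mat s s" "x \<in> carrier_vec s" "x \<noteq> 0\<^sub>v s"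
  shows "N (M *\<^sub>v x) / N x \<le> induced_norm N s M"
  unfolding ind_R using assms R_bdd[OF assms(1)] by (intro cSup_upper) (auto simp: R_def)

lemma ind_mult: assumes "M \<in> carrier_mat s s" "x \<in> carrier_vec s"
  shows "N (M *\<^sub>v x) \<le> induced_norm N s M * N x"
proof (cases "x = 0\<^sub>v s")
  case True
  have "M *\<^sub>v x = 0\<^sub>v s" using True assms by auto
  then show ?thesis using True N0 by simp
next
  case False
  then show ?thesis using ind_ratio[OF assms False] pos[OF assms(2) False] by (simp add: divide_le_eq)
qed

lemma ind_le: assumes "\<And>x. x \<in> carrier_vec s \<Longrightarrow> N (M *\<^sub>v x) \<le> K * N x"
  shows "induced_norm N s M \<le> K"
  unfolding ind_R
proof (rule cSup_least[OF R_ne])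
  fix r assume "r \<in> R M"
  then obtain x where x: "x \<in> carrier_vec s" "x \<noteq> 0\<^sub>v s" "r = N (M *\<^sub>v x) / N x" unfolding R_def by blast
  then show "r \<le> K" using assms[OF x(1)] pos[OF x(1,2)] by (simp add: divide_le_eq)
qed

lemma ind_nonneg: assumes "M \<in> carrier_mat s s" shows "0 \<le> induced_norm N s M"
proof -
  have "0 \<le> N (M *\<^sub>v unit_vec s 0) / N (unit_vec s 0)" using assms e0 nonneg by simp
  also have "\<dots> \<le> induced_norm N s M" using ind_ratio assms e0 by blast
  finally show ?thesis .
qed

end


context vnorm begin

abbreviation f :: "real mat \<Rightarrow> real \<Rightarrow> real" where
  "f M e \<equiv> induced_norm N s (1\<^sub>m s + e \<cdot>\<^sub>m M)"

abbreviation g :: "real mat \<Rightarrow> real \<Rightarrow> real" where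
  "g M e \<equiv> (f M e - 1) / e"

lemma T_carrier: "M \<in> carrier_mat s s \<Longrightarrow> 1\<^sub>m s + e \<cdot>\<^sub>m M \<in> carrier_mat s s" by auto

lemma f_mult: assumes "M \<in> carrier_mat s s" "x \<in> carrier_vec s"
  shows "N (x + e \<cdot>\<^sub>v (M *\<^sub>v x)) \<le> f M e * N x"
  using ind_mult[OF T_carrier[OF assms(1)] assms(2)] Tv[OF assms] by simp

lemma f_le: assumes "M \<in> carrier_mat s s" "\<And>x. x \<in> carrier_vec s \<Longrightarrow> N (x + e \<cdot>\<^sub>v (M *\<^sub>v x)) \<le> K * N x"
  shows "f M e \<le> K"
  using assms Tv[OF assms(1)] by (intro ind_le) auto

lemma f_ge: assumes "M \<in> carrier_mat s s" "x \<in> carrier_vec s" "x \<noteq> 0\<^sub>v s" "K * N x \<le> N (x + e \<cdot>\<^sub>v (M *\<^sub>v x))"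
  shows "K \<le> f M e"
proof -
  have "K \<le> N (x + e \<cdot>\<^sub>v (M *\<^sub>v x)) / N x" using assms(4) pos[OF assms(2,3)] by (simp add: le_divide_eq)
  also have "\<dots> \<le> f M e" using ind_ratio[OF T_carrier[OF assms(1)] assms(2,3)] Tv[OF assms(1,2)] by simp
  finally show ?thesis .
qed

lemma f_conv: assumes M: "M \<in> carrier_mat s s" and ab: "0 < a" "a \<le> b"
  shows "f M a \<le> (a / b) * f M b + (1 - a / b)"
proof (rule f_le[OF M])
  fix x :: "real vec" assume x: "x \<in> carrier_vec s"
  have Mx: "M *\<^sub>v x \<in> carrier_vec s" using M x by auto
  have eq: "x + a \<cdot>\<^sub>v (M *\<^sub>v x) = (a / b) \<cdot>\<^sub>v (x + b \<cdot>\<^sub>v (M *\<^sub>v x)) + (1 - a / b) \<cdot>\<^sub>v x"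
    using ab x Mx M by (intro eq_vecI) (auto simp: field_simps)
  have l: "0 \<le> a / b" "a / b \<le> 1" "0 \<le> 1 - a / b" using ab by auto
  have "N (x + a \<cdot>\<^sub>v (M *\<^sub>v x)) \<le> N ((a / b) \<cdot>\<^sub>v (x + b \<cdot>\<^sub>v (M *\<^sub>v x))) + N ((1 - a / b) \<cdot>\<^sub>v x)"
    unfolding eq using x Mx by (intro tri) auto
  also have "\<dots> = (a / b) * N (x + b \<cdot>\<^sub>v (M *\<^sub>v x)) + (1 - a / b) * N x"
    using x Mx l ab by (simp add: homog)
  also have "\<dots> \<le> (a / b) * (f M b * N x) + (1 - a / b) * N x"
    using f_mult[OF M x] l by (intro add_right_mono mult_left_mono) auto
  finally show "N (x + a \<cdot>\<^sub>v (M *\<^sub>v x)) \<le> ((a / b) * f M b + (1 - a / b)) * N x"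
    by (simp add: algebra_simps)
qed

lemma g_mono: assumes M: "M \<in> carrier_mat s s" and ab: "0 < a" "a \<le> b"
  shows "g M a \<le> g M b"
proof -
  have "f M a - 1 \<le> (a / b) * (f M b - 1)" using f_conv[OF assms] by (simp add: algebra_simps)
  then have "(f M a - 1) / a \<le> ((a / b) * (f M b - 1)) / a" using ab by (intro divide_right_mono) auto
  also have "\<dots> = (f M b - 1) / b" using ab by (simp add: field_simps)
  finally show ?thesis .
qed

lemma g_lower: assumes M: "M \<in> carrier_mat s s"
  shows "\<exists>K. \<forall>e>0. K \<le> g M e"
proof -
  obtain K where K: "K \<ge> 0" "\<forall>x\<in>carrier_vec s. N (M *\<^sub>v x) \<le> K * N x" using bound[OF M] by blast
  have "- K \<le> g M e" if e: "e > 0" for e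
  proof -
    let ?x = "unit_vec s 0 :: real vec"
    have x: "?x \<in> carrier_vec s" "?x \<noteq> 0\<^sub>v s" using e0 by auto
    have Mx: "M *\<^sub>v ?x \<in> carrier_vec s" using mult_mat_vec_carrier[OF M x(1)] .
    have "?x = (?x + e \<cdot>\<^sub>v (M *\<^sub>v ?x)) + (- e) \<cdot>\<^sub>v (M *\<^sub>v ?x)"
      using Mx M by (intro eq_vecI) auto
    then have "N ?x \<le> N (?x + e \<cdot>\<^sub>v (M *\<^sub>v ?x)) + N ((- e) \<cdot>\<^sub>v (M *\<^sub>v ?x))"
      using tri[of "?x + e \<cdot>\<^sub>v (M *\<^sub>v ?x)" "(- e) \<cdot>\<^sub>v (M *\<^sub>v ?x)"] x Mx by auto
    also have "N ((- e) \<cdot>\<^sub>v (M *\<^sub>v ?x)) \<le> e * (K * N ?x)"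
      using homog[OF Mx, of "- e"] K x e by (simp add: mult_left_mono)
    finally have "(1 - e * K) * N ?x \<le> N (?x + e \<cdot>\<^sub>v (M *\<^sub>v ?x))" by (simp add: algebra_simps)
    then have "1 - e * K \<le> f M e" using f_ge[OF M x] by blast
    then show ?thesis using e by (simp add: field_simps)
  qed
  then show ?thesis by blast
qed

lemma g_tendsto_Inf: assumes M: "M \<in> carrier_mat s s"
  shows "(g M \<longlongrightarrow> Inf (g M ` {0<..})) (at_right 0)"
proof -
  obtain K where K: "\<forall>e>0. K \<le> g M e" using g_lower[OF M] by blast
  have bdd: "bdd_below (g M ` {0<..})" using K by (intro bdd_belowI) auto
  have ne: "g M ` {0<..} \<noteq> {}" by auto
  show ?thesis
  proof (rule order_tendstoI)
    fix y assume "y < Inf (g M ` {0<..})"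
    note yl = this
    have "y < g M e" if "e > 0" for e
    proof -
      have "Inf (g M ` {0<..}) \<le> g M e" using that bdd by (intro cInf_lower) auto
      then show ?thesis using yl by simp
    qed
    then have "\<forall>e>0. y < g M e" by blast
    then show "eventually (\<lambda>e. y < g M e) (at_right 0)"
      unfolding eventually_at_right_field by (intro exI[of _ 1]) auto
  next
    fix y assume "Inf (g M ` {0<..}) < y"
    then obtain e0 where e0: "e0 > 0" "g M e0 < y" using cInf_lessD[OF ne] by auto
    have "\<forall>e>0. e < e0 \<longrightarrow> g M e < y" using g_mono[OF M] e0 by (meson le_less_trans less_imp_le)
    then show "eventually (\<lambda>e. g M e < y) (at_right 0)"
      unfolding eventually_at_right_field using e0 by blast
  qed
qed

lemma meas_tendsto: assumes M: "M \<in> carrier_mat s s"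
  shows "(g M \<longlongrightarrow> matrix_measure N s M) (at_right 0)"
proof -
  have "matrix_measure N s M = Inf (g M ` {0<..})"
    unfolding matrix_measure_def using g_tendsto_Inf[OF M] by (intro tendsto_Lim) auto
  then show ?thesis using g_tendsto_Inf[OF M] by simp
qed

lemma f_tendsto_1: assumes M: "M \<in> carrier_mat s s"
  shows "(f M \<longlongrightarrow> 1) (at_right 0)"
proof -
  have "((\<lambda>e. 1 + e * g M e) \<longlongrightarrow> 1 + 0 * matrix_measure N s M) (at_right 0)"
    by (intro tendsto_intros meas_tendsto[OF M])
  then have "((\<lambda>e. 1 + e * g M e) \<longlongrightarrow> 1) (at_right 0)" by simp
  moreover have "eventually (\<lambda>e. 1 + e * g M e = f M e) (at_right 0)"
    unfolding eventually_at_right_field by (intro exI[of _ 1]) auto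
  ultimately show ?thesis by (rule Lim_transform_eventually)
qed

lemma meas_neg: assumes M: "M \<in> carrier_mat s s"
  shows "0 \<le> matrix_measure N s M + matrix_measure N s (- M)"
proof -
  have M': "- M \<in> carrier_mat s s" using M by auto
  have "((\<lambda>e. g M e + g (- M) e) \<longlongrightarrow> matrix_measure N s M + matrix_measure N s (- M)) (at_right 0)"
    by (intro tendsto_add meas_tendsto M M')
  moreover have "eventually (\<lambda>e. 0 \<le> g M e + g (- M) e) (at_right 0)"
    unfolding eventually_at_right_field
  proof (intro exI[of _ 1] conjI allI impI)
    fix e :: real assume e: "0 < e" "e < 1"
    let ?x = "unit_vec s 0 :: real vec"
    have x: "?x \<in> carrier_vec s" "?x \<noteq> 0\<^sub>v s" using e0 by auto
    have Mx: "M *\<^sub>v ?x \<in> carrier_vec s" using mult_mat_vec_carrier[OF M x(1)] .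
    have eq: "2 \<cdot>\<^sub>v ?x = (?x + e \<cdot>\<^sub>v (M *\<^sub>v ?x)) + (?x + e \<cdot>\<^sub>v (- M *\<^sub>v ?x))"
      using Mx M x by (intro eq_vecI) auto
    have "2 * N ?x \<le> N (?x + e \<cdot>\<^sub>v (M *\<^sub>v ?x)) + N (?x + e \<cdot>\<^sub>v (- M *\<^sub>v ?x))"
      using homog[OF x(1), of 2] eq tri[of "?x + e \<cdot>\<^sub>v (M *\<^sub>v ?x)" "?x + e \<cdot>\<^sub>v (- M *\<^sub>v ?x)"] x Mx M
      by auto
    also have "\<dots> \<le> f M e * N ?x + f (- M) e * N ?x"
      using f_mult[OF M x(1)] f_mult[OF M' x(1)] by (intro add_mono) auto
    finally have "2 * N ?x \<le> (f M e + f (- M) e) * N ?x" by (simp add: algebra_simps)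
    then have "2 \<le> f M e + f (- M) e" using pos[OF x] by (metis mult_right_le_imp_le)
    then show "0 \<le> g M e + g (- M) e" using e by (simp add: field_simps add_divide_distrib[symmetric])
  qed (simp)
  ultimately show ?thesis by (intro tendsto_lowerbound) auto
qed

end


lemma vnorm_lp: assumes "1 \<le> p" "0 < s" shows "vnorm s (lp_norm p)"
proof
  show "0 < s" by fact
  fix x :: "real vec" assume x: "x \<in> carrier_vec s"
  show "0 \<le> lp_norm p x" using lp_nonneg assms by auto
  show "lp_norm p x = 0 \<Longrightarrow> x = 0\<^sub>v s" using lp_zero_iff[OF assms(1)] x by auto
  show "lp_norm p (c \<cdot>\<^sub>v x) = \<bar>c\<bar> * lp_norm p x" for c using lp_homog assms by auto
  show "y \<in> carrier_vec s \<Longrightarrow> lp_norm p (x + y) \<le> lp_norm p x + lp_norm p y" for y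
    using lp_triangle[OF assms(1)] x by auto
next
  show "\<exists>c. \<forall>x\<in>carrier_vec s. \<forall>j<s. \<bar>x $ j\<bar> \<le> c * lp_norm p x"
    using lp_comp_le[OF assms(1)] by (intro exI[of _ 1]) auto
  show "\<exists>C. \<forall>x\<in>carrier_vec s. lp_norm p x \<le> C * (\<Sum>j<s. \<bar>x $ j\<bar>)"
  proof (intro exI[of _ "lp_norm p (vec s (\<lambda>_. 1))"] ballI)
    fix x :: "real vec" assume "x \<in> carrier_vec s"
    then have "dim_vec x = s" by auto
    then show "lp_norm p x \<le> lp_norm p (vec s (\<lambda>_. 1)) * (\<Sum>j<s. \<bar>x $ j\<bar>)"
      using lp_le_sum[OF assms(1), of x] by simp
  qed
qed

lemma lp_abs_powr: "1 \<le> q \<Longrightarrow> \<bar>lp_norm (ereal q) x\<bar> powr q = (\<Sum>j<dim_vec x. \<bar>x $ j\<bar> powr q)"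
  using lp_nonneg[of "ereal q" x] by (simp add: lp_fin powr_inv_powr sum_nonneg)

lemma div_mod_idx: "t < (b::nat) \<Longrightarrow> (i * b + t) div b = i" "t < b \<Longrightarrow> (i * b + t) mod b = t"
  by auto

lemma lp_nested_row:
  assumes p: "1 \<le> p" and z: "dim_vec z = a * b"
  shows "lp_norm p z = lp_norm p (vec a (\<lambda>i. lp_norm p (vec b (\<lambda>t. z $ (i * b + t)))))"
  using p
proof (rule ereal_ge1_cases)
  assume pi: "p = \<infinity>"
  let ?w = "vec a (\<lambda>i. lp_norm \<infinity> (vec b (\<lambda>t. z $ (i * b + t))))"
  show ?thesis unfolding pi
  proof (rule antisym)
    show "lp_norm \<infinity> z \<le> lp_norm \<infinity> ?w"
    proof (rule lp_inf_le)
      show "0 \<le> lp_norm \<infinity> ?w" using lp_nonneg by simp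
      fix j assume j: "j < dim_vec z"
      have b: "0 < b" using j z by (cases b) auto
      have ja: "j div b < a" using j z by (simp add: less_mult_imp_div_less)
      have jm: "j mod b < b" using b by simp
      have "\<bar>z $ j\<bar> = \<bar>vec b (\<lambda>t. z $ (j div b * b + t)) $ (j mod b)\<bar>" using jm by simp
      also have "\<dots> \<le> lp_norm \<infinity> (vec b (\<lambda>t. z $ (j div b * b + t)))" using jm by (intro lp_comp_le) auto
      also have "\<dots> = \<bar>?w $ (j div b)\<bar>" using ja lp_nonneg[of \<infinity>] by simp
      also have "\<dots> \<le> lp_norm \<infinity> ?w" using ja by (intro lp_comp_le) auto
      finally show "\<bar>z $ j\<bar> \<le> lp_norm \<infinity> ?w" .
    qed
    show "lp_norm \<infinity> ?w \<le> lp_norm \<infinity> z"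
    proof (rule lp_inf_le)
      show "0 \<le> lp_norm \<infinity> z" using lp_nonneg by simp
      fix i assume i: "i < dim_vec ?w"
      have "lp_norm \<infinity> (vec b (\<lambda>t. z $ (i * b + t))) \<le> lp_norm \<infinity> z"
      proof (rule lp_inf_le)
        show "0 \<le> lp_norm \<infinity> z" using lp_nonneg by simp
        fix t assume t: "t < dim_vec (vec b (\<lambda>t. z $ (i * b + t)))"
        then have "i * b + t < dim_vec z" using i z idx_lt[of i a t b] by simp
        then show "\<bar>vec b (\<lambda>t. z $ (i * b + t)) $ t\<bar> \<le> lp_norm \<infinity> z" using t lp_comp_le[of \<infinity>] by simp
      qed
      then show "\<bar>?w $ i\<bar> \<le> lp_norm \<infinity> z" using i lp_nonneg[of \<infinity>] by simp
    qed
  qed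
next
  fix q assume q: "p = ereal q" "1 \<le> q"
  have "(\<Sum>i<a. \<bar>lp_norm (ereal q) (vec b (\<lambda>t. z $ (i * b + t)))\<bar> powr q) = (\<Sum>i<a. \<Sum>t<b. \<bar>z $ (i * b + t)\<bar> powr q)"
    using q by (simp add: lp_abs_powr)
  also have "\<dots> = (\<Sum>j<dim_vec z. \<bar>z $ j\<bar> powr q)" unfolding z by (simp add: sum_split_prod)
  finally show ?thesis using q by (simp add: lp_fin)
qed

lemma lp_nested_col:
  assumes p: "1 \<le> p" and z: "dim_vec z = a * b"
  shows "lp_norm p z = lp_norm p (vec b (\<lambda>t. lp_norm p (vec a (\<lambda>i. z $ (i * b + t)))))"
  using p
proof (rule ereal_ge1_cases)
  assume pi: "p = \<infinity>"
  let ?w = "vec b (\<lambda>t. lp_norm \<infinity> (vec a (\<lambda>i. z $ (i * b + t))))"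
  show ?thesis unfolding pi
  proof (rule antisym)
    show "lp_norm \<infinity> z \<le> lp_norm \<infinity> ?w"
    proof (rule lp_inf_le)
      show "0 \<le> lp_norm \<infinity> ?w" using lp_nonneg by simp
      fix j assume j: "j < dim_vec z"
      have b: "0 < b" using j z by (cases b) auto
      have ja: "j div b < a" using j z by (simp add: less_mult_imp_div_less)
      have jm: "j mod b < b" using b by simp
      have "\<bar>z $ j\<bar> = \<bar>vec a (\<lambda>i. z $ (i * b + j mod b)) $ (j div b)\<bar>" using ja by simp
      also have "\<dots> \<le> lp_norm \<infinity> (vec a (\<lambda>i. z $ (i * b + j mod b)))" using ja by (intro lp_comp_le) auto
      also have "\<dots> = \<bar>?w $ (j mod b)\<bar>" using jm lp_nonneg[of \<infinity>] by simp
      also have "\<dots> \<le> lp_norm \<infinity> ?w" using jm by (intro lp_comp_le) auto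
      finally show "\<bar>z $ j\<bar> \<le> lp_norm \<infinity> ?w" .
    qed
    show "lp_norm \<infinity> ?w \<le> lp_norm \<infinity> z"
    proof (rule lp_inf_le)
      show "0 \<le> lp_norm \<infinity> z" using lp_nonneg by simp
      fix t assume t: "t < dim_vec ?w"
      have "lp_norm \<infinity> (vec a (\<lambda>i. z $ (i * b + t))) \<le> lp_norm \<infinity> z"
      proof (rule lp_inf_le)
        show "0 \<le> lp_norm \<infinity> z" using lp_nonneg by simp
        fix i assume i: "i < dim_vec (vec a (\<lambda>i. z $ (i * b + t)))"
        then have "i * b + t < dim_vec z" using t z idx_lt[of i a t b] by simp
        then show "\<bar>vec a (\<lambda>i. z $ (i * b + t)) $ i\<bar> \<le> lp_norm \<infinity> z" using i lp_comp_le[of \<infinity>] by simp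
      qed
      then show "\<bar>?w $ t\<bar> \<le> lp_norm \<infinity> z" using t lp_nonneg[of \<infinity>] by simp
    qed
  qed
next
  fix q assume q: "p = ereal q" "1 \<le> q"
  have "(\<Sum>t<b. \<bar>lp_norm (ereal q) (vec a (\<lambda>i. z $ (i * b + t)))\<bar> powr q) = (\<Sum>t<b. \<Sum>i<a. \<bar>z $ (i * b + t)\<bar> powr q)"
    using q by (simp add: lp_abs_powr)
  also have "\<dots> = (\<Sum>i<a. \<Sum>t<b. \<bar>z $ (i * b + t)\<bar> powr q)" by (rule sum.swap)
  also have "\<dots> = (\<Sum>j<dim_vec z. \<bar>z $ j\<bar> powr q)" unfolding z by (simp add: sum_split_prod)
  finally show ?thesis using q by (simp add: lp_fin)
qed


lemma eq_vec_prod: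
  assumes "dim_vec w1 = a * b" "dim_vec w2 = a * b"
    "\<And>i t. i < a \<Longrightarrow> t < b \<Longrightarrow> w1 $ (i * b + t) = w2 $ (i * b + t)"
  shows "w1 = w2"
proof (rule eq_vecI)
  fix j assume j: "j < dim_vec w2"
  have b: "0 < b" using j assms(2) by (cases b) auto
  have ja: "j div b < a" using j assms(2) by (simp add: less_mult_imp_div_less)
  have jm: "j mod b < b" using b by simp
  have "j = j div b * b + j mod b" by simp
  then show "w1 $ j = w2 $ j" using assms(3)[OF ja jm] by metis
qed (use assms in simp)

lemma kron_entry: assumes "X \<in> carrier_mat a a" "Y \<in> carrier_mat b b" "i < a" "t < b" "i' < a" "t' < b"
  shows "kronecker X Y $$ (i * b + t, i' * b + t') = X $$ (i, i') * Y $$ (t, t')"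
proof -
  have "i * b + t < a * b" "i' * b + t' < a * b" using assms idx_lt by auto
  then show ?thesis using assms unfolding kronecker_def by simp
qed

lemma kron_carrier: assumes "X \<in> carrier_mat a a" "Y \<in> carrier_mat b b"
  shows "kronecker X Y \<in> carrier_mat (a * b) (a * b)"
  using assms unfolding kronecker_def by auto

lemma kron_sum_carrier: assumes "X \<in> carrier_mat a a" "Y \<in> carrier_mat b b"
  shows "kron_sum X Y \<in> carrier_mat (a * b) (a * b)"
  using assms unfolding kron_sum_def by (auto intro!: kron_carrier add_carrier_mat)

lemma KI_entry: assumes X: "X \<in> carrier_mat a a" and z: "z \<in> carrier_vec (a * b)" and it: "i < a" "t < b"
  shows "(kronecker X (1\<^sub>m b) *\<^sub>v z) $ (i * b + t) = (X *\<^sub>v vec a (\<lambda>i'. z $ (i' * b + t))) $ i"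
proof -
  have K: "kronecker X (1\<^sub>m b) \<in> carrier_mat (a * b) (a * b)" using kron_carrier[OF X, of "1\<^sub>m b" b] by auto
  have "(kronecker X (1\<^sub>m b) *\<^sub>v z) $ (i * b + t) = (\<Sum>j<a * b. kronecker X (1\<^sub>m b) $$ (i * b + t, j) * z $ j)"
    using idx_lt[OF it] by (intro mv_entry[OF K z])
  also have "\<dots> = (\<Sum>i'<a. \<Sum>t'<b. kronecker X (1\<^sub>m b) $$ (i * b + t, i' * b + t') * z $ (i' * b + t'))"
    by (rule sum_split_prod)
  also have "\<dots> = (\<Sum>i'<a. \<Sum>t'<b. X $$ (i, i') * (if t = t' then 1 else 0) * z $ (i' * b + t'))"
    using it by (intro sum.cong refl) (simp add: kron_entry[OF X one_carrier_mat])
  also have "\<dots> = (\<Sum>i'<a. X $$ (i, i') * z $ (i' * b + t))"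
  proof (intro sum.cong refl)
    fix i' assume "i' \<in> {..<a}"
    have "(\<Sum>t'<b. X $$ (i, i') * (if t = t' then 1 else 0) * z $ (i' * b + t')) = (\<Sum>t'<b. if t = t' then X $$ (i, i') * z $ (i' * b + t') else 0)"
      by (intro sum.cong) auto
    also have "\<dots> = X $$ (i, i') * z $ (i' * b + t)" using it by (simp add: sum.delta)
    finally show "(\<Sum>t'<b. X $$ (i, i') * (if t = t' then 1 else 0) * z $ (i' * b + t')) = X $$ (i, i') * z $ (i' * b + t)" .
  qed
  also have "\<dots> = (X *\<^sub>v vec a (\<lambda>i'. z $ (i' * b + t))) $ i"
    using it by (subst mv_entry[OF X _ it(1)]) auto
  finally show ?thesis .
qed

lemma IK_entry: assumes Y: "Y \<in> carrier_mat b b" and z: "z \<in> carrier_vec (a * b)" and it: "i < a" "t < b"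
  shows "(kronecker (1\<^sub>m a) Y *\<^sub>v z) $ (i * b + t) = (Y *\<^sub>v vec b (\<lambda>t'. z $ (i * b + t'))) $ t"
proof -
  have K: "kronecker (1\<^sub>m a) Y \<in> carrier_mat (a * b) (a * b)" using kron_carrier[OF _ Y, of "1\<^sub>m a" a] by auto
  have "(kronecker (1\<^sub>m a) Y *\<^sub>v z) $ (i * b + t) = (\<Sum>j<a * b. kronecker (1\<^sub>m a) Y $$ (i * b + t, j) * z $ j)"
    using idx_lt[OF it] by (intro mv_entry[OF K z])
  also have "\<dots> = (\<Sum>i'<a. \<Sum>t'<b. kronecker (1\<^sub>m a) Y $$ (i * b + t, i' * b + t') * z $ (i' * b + t'))"
    by (rule sum_split_prod)
  also have "\<dots> = (\<Sum>i'<a. \<Sum>t'<b. (if i = i' then 1 else 0) * Y $$ (t, t') * z $ (i' * b + t'))"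
    using it by (intro sum.cong refl) (simp add: kron_entry[OF one_carrier_mat Y])
  also have "\<dots> = (\<Sum>i'<a. if i = i' then (\<Sum>t'<b. Y $$ (t, t') * z $ (i' * b + t')) else 0)"
    by (intro sum.cong refl) auto
  also have "\<dots> = (\<Sum>t'<b. Y $$ (t, t') * z $ (i * b + t'))" using it by (simp add: sum.delta)
  also have "\<dots> = (Y *\<^sub>v vec b (\<lambda>t'. z $ (i * b + t'))) $ t"
    using it by (subst mv_entry[OF Y _ it(2)]) auto
  finally show ?thesis .
qed


lemma KI_bound:
  assumes p: "1 \<le> p" and X: "X \<in> carrier_mat a a" and a: "0 < a" and z: "z \<in> carrier_vec (a * b)"
  shows "lp_norm p (z + e \<cdot>\<^sub>v (kronecker X (1\<^sub>m b) *\<^sub>v z)) \<le> induced_norm (lp_norm p) a (1\<^sub>m a + e \<cdot>\<^sub>m X) * lp_norm p z"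
proof -
  interpret V: vnorm a "lp_norm p" using vnorm_lp[OF p a] .
  let ?F = "induced_norm (lp_norm p) a (1\<^sub>m a + e \<cdot>\<^sub>m X)"
  let ?K = "kronecker X (1\<^sub>m b)"
  have K: "?K \<in> carrier_mat (a * b) (a * b)" using kron_carrier[OF X, of "1\<^sub>m b" b] by auto
  let ?w = "z + e \<cdot>\<^sub>v (?K *\<^sub>v z)"
  have wd: "dim_vec ?w = a * b" using K z by simp
  define u where "u t = vec a (\<lambda>i. z $ (i * b + t))" for t
  have u: "u t \<in> carrier_vec a" for t unfolding u_def by simp
  have col: "vec a (\<lambda>i. ?w $ (i * b + t)) = u t + e \<cdot>\<^sub>v (X *\<^sub>v u t)" if t: "t < b" for t
  proof (rule eq_vecI)
    fix i assume "i < dim_vec (u t + e \<cdot>\<^sub>v (X *\<^sub>v u t))"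
    then have i: "i < a" using u X by simp
    have "?w $ (i * b + t) = z $ (i * b + t) + e * (?K *\<^sub>v z) $ (i * b + t)"
      using idx_lt[OF i t] K z by simp
    also have "\<dots> = u t $ i + e * (X *\<^sub>v u t) $ i" using KI_entry[OF X z i t] i unfolding u_def by simp
    finally show "vec a (\<lambda>i. ?w $ (i * b + t)) $ i = (u t + e \<cdot>\<^sub>v (X *\<^sub>v u t)) $ i"
      using i X u by simp
  qed (use u X in simp)
  have F0: "0 \<le> ?F" using V.ind_nonneg X by auto
  have "lp_norm p ?w = lp_norm p (vec b (\<lambda>t. lp_norm p (vec a (\<lambda>i. ?w $ (i * b + t)))))"
    by (rule lp_nested_col[OF p wd])
  also have "\<dots> \<le> lp_norm p (?F \<cdot>\<^sub>v vec b (\<lambda>t. lp_norm p (u t)))"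
  proof (rule lp_mono[OF p])
    fix t assume "t < dim_vec (vec b (\<lambda>t. lp_norm p (vec a (\<lambda>i. ?w $ (i * b + t)))))"
    then have t: "t < b" by simp
    have "lp_norm p (vec a (\<lambda>i. ?w $ (i * b + t))) \<le> ?F * lp_norm p (u t)"
      unfolding col[OF t] using V.f_mult[OF X u] .
    then show "\<bar>vec b (\<lambda>t. lp_norm p (vec a (\<lambda>i. ?w $ (i * b + t)))) $ t\<bar> \<le> \<bar>(?F \<cdot>\<^sub>v vec b (\<lambda>t. lp_norm p (u t))) $ t\<bar>"
      using t lp_nonneg[OF p] F0 by simp
  qed simp
  also have "\<dots> = ?F * lp_norm p z"
    using lp_homog[OF p] F0 lp_nested_col[OF p, of z a b] z unfolding u_def by simp
  finally show ?thesis .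
qed

lemma IK_bound:
  assumes p: "1 \<le> p" and Y: "Y \<in> carrier_mat b b" and b: "0 < b" and z: "z \<in> carrier_vec (a * b)"
  shows "lp_norm p (z + e \<cdot>\<^sub>v (kronecker (1\<^sub>m a) Y *\<^sub>v z)) \<le> induced_norm (lp_norm p) b (1\<^sub>m b + e \<cdot>\<^sub>m Y) * lp_norm p z"
proof -
  interpret V: vnorm b "lp_norm p" using vnorm_lp[OF p b] .
  let ?F = "induced_norm (lp_norm p) b (1\<^sub>m b + e \<cdot>\<^sub>m Y)"
  let ?K = "kronecker (1\<^sub>m a) Y"
  have K: "?K \<in> carrier_mat (a * b) (a * b)" using kron_carrier[OF _ Y, of "1\<^sub>m a" a] by auto
  let ?w = "z + e \<cdot>\<^sub>v (?K *\<^sub>v z)"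
  have wd: "dim_vec ?w = a * b" using K z by simp
  define u where "u i = vec b (\<lambda>t. z $ (i * b + t))" for i
  have u: "u i \<in> carrier_vec b" for i unfolding u_def by simp
  have row: "vec b (\<lambda>t. ?w $ (i * b + t)) = u i + e \<cdot>\<^sub>v (Y *\<^sub>v u i)" if i: "i < a" for i
  proof (rule eq_vecI)
    fix t assume "t < dim_vec (u i + e \<cdot>\<^sub>v (Y *\<^sub>v u i))"
    then have t: "t < b" using u Y by simp
    have "?w $ (i * b + t) = z $ (i * b + t) + e * (?K *\<^sub>v z) $ (i * b + t)"
      using idx_lt[OF i t] K z by simp
    also have "\<dots> = u i $ t + e * (Y *\<^sub>v u i) $ t" using IK_entry[OF Y z i t] t unfolding u_def by simp
    finally show "vec b (\<lambda>t. ?w $ (i * b + t)) $ t = (u i + e \<cdot>\<^sub>v (Y *\<^sub>v u i)) $ t"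
      using t Y u by simp
  qed (use u Y in simp)
  have F0: "0 \<le> ?F" using V.ind_nonneg Y by auto
  have "lp_norm p ?w = lp_norm p (vec a (\<lambda>i. lp_norm p (vec b (\<lambda>t. ?w $ (i * b + t)))))"
    by (rule lp_nested_row[OF p wd])
  also have "\<dots> \<le> lp_norm p (?F \<cdot>\<^sub>v vec a (\<lambda>i. lp_norm p (u i)))"
  proof (rule lp_mono[OF p])
    fix i assume "i < dim_vec (vec a (\<lambda>i. lp_norm p (vec b (\<lambda>t. ?w $ (i * b + t)))))"
    then have i: "i < a" by simp
    have "lp_norm p (vec b (\<lambda>t. ?w $ (i * b + t))) \<le> ?F * lp_norm p (u i)"
      unfolding row[OF i] using V.f_mult[OF Y u] .
    then show "\<bar>vec a (\<lambda>i. lp_norm p (vec b (\<lambda>t. ?w $ (i * b + t)))) $ i\<bar> \<le> \<bar>(?F \<cdot>\<^sub>v vec a (\<lambda>i. lp_norm p (u i))) $ i\<bar>"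
      using i lp_nonneg[OF p] F0 by simp
  qed simp
  also have "\<dots> = ?F * lp_norm p z"
    using lp_homog[OF p] F0 lp_nested_row[OF p, of z a b] z unfolding u_def by simp
  finally show ?thesis .
qed

definition kv :: "real vec \<Rightarrow> real vec \<Rightarrow> real vec" where
  "kv u v = vec (dim_vec u * dim_vec v) (\<lambda>j. u $ (j div dim_vec v) * v $ (j mod dim_vec v))"

lemma kv_entry: assumes "i < dim_vec u" "t < dim_vec v" shows "kv u v $ (i * dim_vec v + t) = u $ i * v $ t"
proof -
  have "(i * dim_vec v + t) div dim_vec v = i" "(i * dim_vec v + t) mod dim_vec v = t"
    by (rule div_mod_idx(1)[OF assms(2)], rule div_mod_idx(2)[OF assms(2)])
  then show ?thesis unfolding kv_def using idx_lt[OF assms] by simp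
qed

lemma kv_dim[simp]: "dim_vec (kv u v) = dim_vec u * dim_vec v" unfolding kv_def by simp

lemma lp_kv: assumes p: "1 \<le> p" shows "lp_norm p (kv u v) = lp_norm p u * lp_norm p v"
proof -
  let ?a = "dim_vec u" and ?b = "dim_vec v"
  have "lp_norm p (kv u v) = lp_norm p (vec ?a (\<lambda>i. lp_norm p (vec ?b (\<lambda>t. kv u v $ (i * ?b + t)))))"
    by (rule lp_nested_row[OF p]) simp
  also have "\<dots> = lp_norm p (vec ?a (\<lambda>i. \<bar>u $ i\<bar> * lp_norm p v))"
  proof (intro arg_cong[of _ _ "lp_norm p"] eq_vecI)
    fix i assume "i < dim_vec (vec ?a (\<lambda>i. \<bar>u $ i\<bar> * lp_norm p v))"
    then have i: "i < ?a" by simp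
    have "vec ?b (\<lambda>t. kv u v $ (i * ?b + t)) = u $ i \<cdot>\<^sub>v v" using i kv_entry by (intro eq_vecI) auto
    then show "vec ?a (\<lambda>i. lp_norm p (vec ?b (\<lambda>t. kv u v $ (i * ?b + t)))) $ i = vec ?a (\<lambda>i. \<bar>u $ i\<bar> * lp_norm p v) $ i"
      using i lp_homog[OF p] by simp
  qed simp
  also have "\<dots> = lp_norm p (lp_norm p v \<cdot>\<^sub>v vec ?a (\<lambda>i. \<bar>u $ i\<bar>))"
    by (intro arg_cong[of _ _ "lp_norm p"] eq_vecI) auto
  also have "\<dots> = lp_norm p v * lp_norm p (vec ?a (\<lambda>i. \<bar>u $ i\<bar>))" using lp_homog[OF p] lp_nonneg[OF p] by simp
  also have "lp_norm p (vec ?a (\<lambda>i. \<bar>u $ i\<bar>)) = lp_norm p u" by (intro lp_cong_abs) auto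
  finally show ?thesis by simp
qed

lemma kv_identity:
  assumes X: "X \<in> carrier_mat a a" and Y: "Y \<in> carrier_mat b b" and u: "u \<in> carrier_vec a" and v: "v \<in> carrier_vec b"
  shows "kv (u + e \<cdot>\<^sub>v (X *\<^sub>v u)) (v + e \<cdot>\<^sub>v (Y *\<^sub>v v))
    = (kv u v + e \<cdot>\<^sub>v (kron_sum X Y *\<^sub>v kv u v)) + (e * e) \<cdot>\<^sub>v kv (X *\<^sub>v u) (Y *\<^sub>v v)"
proof (rule eq_vec_prod[of _ a b])
  have du: "dim_vec u = a" and dv: "dim_vec v = b" using u v by auto
  have dXu: "dim_vec (X *\<^sub>v u) = a" and dYv: "dim_vec (Y *\<^sub>v v) = b" using X Y by auto
  have KS: "kron_sum X Y \<in> carrier_mat (a * b) (a * b)" using kron_sum_carrier[OF X Y] .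
  have w: "kv u v \<in> carrier_vec (a * b)" by (rule carrier_vecI) (simp only: kv_dim du dv)
  show "dim_vec (kv (u + e \<cdot>\<^sub>v (X *\<^sub>v u)) (v + e \<cdot>\<^sub>v (Y *\<^sub>v v))) = a * b" using du dv dXu dYv by simp
  show "dim_vec ((kv u v + e \<cdot>\<^sub>v (kron_sum X Y *\<^sub>v kv u v)) + (e * e) \<cdot>\<^sub>v kv (X *\<^sub>v u) (Y *\<^sub>v v)) = a * b"
    using dXu dYv by simp
  fix i t assume it: "i < a" "t < b"
  have K1: "kronecker X (1\<^sub>m b) \<in> carrier_mat (a * b) (a * b)" using kron_carrier[OF X, of "1\<^sub>m b" b] by auto
  have K2: "kronecker (1\<^sub>m a) Y \<in> carrier_mat (a * b) (a * b)" using kron_carrier[OF _ Y, of "1\<^sub>m a" a] by auto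
  have ks: "kron_sum X Y *\<^sub>v kv u v = kronecker X (1\<^sub>m b) *\<^sub>v kv u v + kronecker (1\<^sub>m a) Y *\<^sub>v kv u v"
  proof -
    have rX: "dim_row X = a" and rY: "dim_row Y = b" using X Y by auto
    show ?thesis unfolding kron_sum_def rX rY by (rule add_mult_distrib_mat_vec[OF K1 K2 w])
  qed
  have c1: "vec a (\<lambda>i'. kv u v $ (i' * b + t)) = v $ t \<cdot>\<^sub>v u"
  proof (rule eq_vecI)
    fix i' assume "i' < dim_vec (v $ t \<cdot>\<^sub>v u)"
    then have i': "i' < a" using du by simp
    show "vec a (\<lambda>i'. kv u v $ (i' * b + t)) $ i' = (v $ t \<cdot>\<^sub>v u) $ i'"
      using kv_entry[of i' u t v] du dv i' it by (simp add: mult.commute)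
  qed (use du in simp)
  have c2: "vec b (\<lambda>t'. kv u v $ (i * b + t')) = u $ i \<cdot>\<^sub>v v"
  proof (rule eq_vecI)
    fix t' assume "t' < dim_vec (u $ i \<cdot>\<^sub>v v)"
    then have t': "t' < b" using dv by simp
    show "vec b (\<lambda>t'. kv u v $ (i * b + t')) $ t' = (u $ i \<cdot>\<^sub>v v) $ t'"
      using kv_entry[of i u t' v] du dv t' it by simp
  qed (use dv in simp)
  have e1: "(kronecker X (1\<^sub>m b) *\<^sub>v kv u v) $ (i * b + t) = v $ t * (X *\<^sub>v u) $ i"
  proof -
    have "(kronecker X (1\<^sub>m b) *\<^sub>v kv u v) $ (i * b + t) = (X *\<^sub>v (v $ t \<cdot>\<^sub>v u)) $ i"
      using KI_entry[OF X w it] unfolding c1 .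
    also have "\<dots> = (v $ t \<cdot>\<^sub>v (X *\<^sub>v u)) $ i" unfolding mult_mat_vec[OF X u] ..
    also have "\<dots> = v $ t * (X *\<^sub>v u) $ i" using dXu it by simp
    finally show ?thesis .
  qed
  have e2: "(kronecker (1\<^sub>m a) Y *\<^sub>v kv u v) $ (i * b + t) = u $ i * (Y *\<^sub>v v) $ t"
  proof -
    have "(kronecker (1\<^sub>m a) Y *\<^sub>v kv u v) $ (i * b + t) = (Y *\<^sub>v (u $ i \<cdot>\<^sub>v v)) $ t"
      using IK_entry[OF Y w it] unfolding c2 .
    also have "\<dots> = (u $ i \<cdot>\<^sub>v (Y *\<^sub>v v)) $ t" unfolding mult_mat_vec[OF Y v] ..
    also have "\<dots> = u $ i * (Y *\<^sub>v v) $ t" using dYv it by simp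
    finally show ?thesis .
  qed
  have idx: "i * b + t < a * b" using idx_lt[OF it] .
  have dK1: "dim_vec (kronecker X (1\<^sub>m b) *\<^sub>v kv u v) = a * b" using K1 by simp
  have dK2: "dim_vec (kronecker (1\<^sub>m a) Y *\<^sub>v kv u v) = a * b" using K2 by simp
  have L: "kv (u + e \<cdot>\<^sub>v (X *\<^sub>v u)) (v + e \<cdot>\<^sub>v (Y *\<^sub>v v)) $ (i * b + t)
     = (u $ i + e * (X *\<^sub>v u) $ i) * (v $ t + e * (Y *\<^sub>v v) $ t)"
    using kv_entry[of i "u + e \<cdot>\<^sub>v (X *\<^sub>v u)" t "v + e \<cdot>\<^sub>v (Y *\<^sub>v v)"] du dv dXu dYv it by simp
  have R: "((kv u v + e \<cdot>\<^sub>v (kron_sum X Y *\<^sub>v kv u v)) + (e * e) \<cdot>\<^sub>v kv (X *\<^sub>v u) (Y *\<^sub>v v)) $ (i * b + t)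
     = kv u v $ (i * b + t) + e * ((kronecker X (1\<^sub>m b) *\<^sub>v kv u v) $ (i * b + t) + (kronecker (1\<^sub>m a) Y *\<^sub>v kv u v) $ (i * b + t))
       + (e * e) * kv (X *\<^sub>v u) (Y *\<^sub>v v) $ (i * b + t)"
    unfolding ks using idx dK1 dK2 du dv dXu dYv by simp
  have "u $ i * v $ t + e * (v $ t * (X *\<^sub>v u) $ i + u $ i * (Y *\<^sub>v v) $ t) + (e * e) * ((X *\<^sub>v u) $ i * (Y *\<^sub>v v) $ t)
     = (u $ i + e * (X *\<^sub>v u) $ i) * (v $ t + e * (Y *\<^sub>v v) $ t)"
    by (simp add: algebra_simps)
  then show "kv (u + e \<cdot>\<^sub>v (X *\<^sub>v u)) (v + e \<cdot>\<^sub>v (Y *\<^sub>v v)) $ (i * b + t) =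
    ((kv u v + e \<cdot>\<^sub>v (kron_sum X Y *\<^sub>v kv u v)) + (e * e) \<cdot>\<^sub>v kv (X *\<^sub>v u) (Y *\<^sub>v v)) $ (i * b + t)"
    unfolding L R e1 e2 using kv_entry[of i u t v] kv_entry[of i "X *\<^sub>v u" t "Y *\<^sub>v v"] du dv dXu dYv it by simp
qed


lemma filterlim_double: "filterlim (\<lambda>e::real. 2 * e) (at_right 0) (at_right 0)"
proof -
  have "((\<lambda>e::real. 2 * e) \<longlongrightarrow> 2 * 0) (at_right 0)" by (intro tendsto_intros)
  moreover have "eventually (\<lambda>e::real. 2 * e \<in> {0<..} \<and> 2 * e \<noteq> 0) (at_right 0)"
    unfolding eventually_at_right_field by (intro exI[of _ 1]) auto
  ultimately show ?thesis unfolding filterlim_at by simp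
qed

lemma ks_split: assumes X: "X \<in> carrier_mat a a" and Y: "Y \<in> carrier_mat b b" and z: "z \<in> carrier_vec (a * b)"
  shows "kron_sum X Y *\<^sub>v z = kronecker X (1\<^sub>m b) *\<^sub>v z + kronecker (1\<^sub>m a) Y *\<^sub>v z"
proof -
  have K1: "kronecker X (1\<^sub>m b) \<in> carrier_mat (a * b) (a * b)" using kron_carrier[OF X, of "1\<^sub>m b" b] by auto
  have K2: "kronecker (1\<^sub>m a) Y \<in> carrier_mat (a * b) (a * b)" using kron_carrier[OF _ Y, of "1\<^sub>m a" a] by auto
  have rX: "dim_row X = a" and rY: "dim_row Y = b" using X Y by auto
  show ?thesis unfolding kron_sum_def rX rY by (rule add_mult_distrib_mat_vec[OF K1 K2 z])
qed

theorem meas_kron_sum: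
  assumes p: "1 \<le> p" and a: "0 < a" and b: "0 < b" and X: "X \<in> carrier_mat a a" and Y: "Y \<in> carrier_mat b b"
  shows "matrix_measure (lp_norm p) (a * b) (kron_sum X Y) = matrix_measure (lp_norm p) a X + matrix_measure (lp_norm p) b Y"
proof -
  interpret VA: vnorm a "lp_norm p" using vnorm_lp[OF p a] .
  interpret VB: vnorm b "lp_norm p" using vnorm_lp[OF p b] .
  have ab: "0 < a * b" using a b by simp
  interpret VK: vnorm "a * b" "lp_norm p" using vnorm_lp[OF p ab] .
  have KS: "kron_sum X Y \<in> carrier_mat (a * b) (a * b)" using kron_sum_carrier[OF X Y] .
  have K1: "kronecker X (1\<^sub>m b) \<in> carrier_mat (a * b) (a * b)" using kron_carrier[OF X, of "1\<^sub>m b" b] by auto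
  have K2: "kronecker (1\<^sub>m a) Y \<in> carrier_mat (a * b) (a * b)" using kron_carrier[OF _ Y, of "1\<^sub>m a" a] by auto
  define fA where "fA e = induced_norm (lp_norm p) a (1\<^sub>m a + e \<cdot>\<^sub>m X)" for e
  define fB where "fB e = induced_norm (lp_norm p) b (1\<^sub>m b + e \<cdot>\<^sub>m Y)" for e
  define fK where "fK e = induced_norm (lp_norm p) (a * b) (1\<^sub>m (a * b) + e \<cdot>\<^sub>m kron_sum X Y)" for e
  define mA where "mA = matrix_measure (lp_norm p) a X"
  define mB where "mB = matrix_measure (lp_norm p) b Y"
  define mK where "mK = matrix_measure (lp_norm p) (a * b) (kron_sum X Y)"
  have tA: "((\<lambda>e. (fA e - 1) / e) \<longlongrightarrow> mA) (at_right 0)" unfolding fA_def mA_def by (rule VA.meas_tendsto[OF X])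
  have tB: "((\<lambda>e. (fB e - 1) / e) \<longlongrightarrow> mB) (at_right 0)" unfolding fB_def mB_def by (rule VB.meas_tendsto[OF Y])
  have tK: "((\<lambda>e. (fK e - 1) / e) \<longlongrightarrow> mK) (at_right 0)" unfolding fK_def mK_def by (rule VK.meas_tendsto[OF KS])
  have fB1: "(fB \<longlongrightarrow> 1) (at_right 0)" unfolding fB_def by (rule VB.f_tendsto_1[OF Y])
  have fA0: "0 \<le> fA e" for e unfolding fA_def using VA.ind_nonneg X by auto
  have fB0: "0 \<le> fB e" for e unfolding fB_def using VB.ind_nonneg Y by auto
  have fK0: "0 \<le> fK e" for e unfolding fK_def using VK.ind_nonneg KS by auto
  have up: "fK e \<le> (fA (2 * e) + fB (2 * e)) / 2" if e: "0 < e" for e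
    unfolding fK_def
  proof (rule VK.f_le[OF KS])
    fix z :: "real vec" assume z: "z \<in> carrier_vec (a * b)"
    have K1z: "kronecker X (1\<^sub>m b) *\<^sub>v z \<in> carrier_vec (a * b)" using K1 z by auto
    have K2z: "kronecker (1\<^sub>m a) Y *\<^sub>v z \<in> carrier_vec (a * b)" using K2 z by auto
    have eq: "z + e \<cdot>\<^sub>v (kron_sum X Y *\<^sub>v z) = (1/2) \<cdot>\<^sub>v (z + (2 * e) \<cdot>\<^sub>v (kronecker X (1\<^sub>m b) *\<^sub>v z))
       + (1/2) \<cdot>\<^sub>v (z + (2 * e) \<cdot>\<^sub>v (kronecker (1\<^sub>m a) Y *\<^sub>v z))"
      unfolding ks_split[OF X Y z] using z K1z K2z K1 K2 by (intro eq_vecI) (auto simp: algebra_simps)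
    have "lp_norm p (z + e \<cdot>\<^sub>v (kron_sum X Y *\<^sub>v z)) \<le> lp_norm p ((1/2) \<cdot>\<^sub>v (z + (2 * e) \<cdot>\<^sub>v (kronecker X (1\<^sub>m b) *\<^sub>v z)))
       + lp_norm p ((1/2) \<cdot>\<^sub>v (z + (2 * e) \<cdot>\<^sub>v (kronecker (1\<^sub>m a) Y *\<^sub>v z)))"
      unfolding eq using z K1z K2z by (intro VK.tri) auto
    also have "\<dots> = (1/2) * lp_norm p (z + (2 * e) \<cdot>\<^sub>v (kronecker X (1\<^sub>m b) *\<^sub>v z))
       + (1/2) * lp_norm p (z + (2 * e) \<cdot>\<^sub>v (kronecker (1\<^sub>m a) Y *\<^sub>v z))"
      using lp_homog[OF p] by simp
    also have "\<dots> \<le> (1/2) * (fA (2 * e) * lp_norm p z) + (1/2) * (fB (2 * e) * lp_norm p z)"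
      unfolding fA_def fB_def using KI_bound[OF p X a z] IK_bound[OF p Y b z] by (intro add_mono mult_left_mono) auto
    finally show "lp_norm p (z + e \<cdot>\<^sub>v (kron_sum X Y *\<^sub>v z)) \<le> (fA (2 * e) + fB (2 * e)) / 2 * lp_norm p z"
      by (simp add: algebra_simps)
  qed
  have upg: "(fK e - 1) / e \<le> (fA (2 * e) - 1) / (2 * e) + (fB (2 * e) - 1) / (2 * e)" if e: "0 < e" for e
  proof -
    have "(fK e - 1) / e \<le> ((fA (2 * e) + fB (2 * e)) / 2 - 1) / e" using up[OF e] e by (intro divide_right_mono) auto
    also have "\<dots> = (fA (2 * e) - 1) / (2 * e) + (fB (2 * e) - 1) / (2 * e)" using e by (simp add: field_simps)
    finally show ?thesis .
  qed
  have tA2: "((\<lambda>e. (fA (2 * e) - 1) / (2 * e)) \<longlongrightarrow> mA) (at_right 0)"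
    using filterlim_compose[OF tA filterlim_double] by simp
  have tB2: "((\<lambda>e. (fB (2 * e) - 1) / (2 * e)) \<longlongrightarrow> mB) (at_right 0)"
    using filterlim_compose[OF tB filterlim_double] by simp
  have le1: "mK \<le> mA + mB"
  proof (rule tendsto_le[OF trivial_limit_at_right_real tendsto_add[OF tA2 tB2] tK])
    show "eventually (\<lambda>e. (fK e - 1) / e \<le> (fA (2 * e) - 1) / (2 * e) + (fB (2 * e) - 1) / (2 * e)) (at_right 0)"
      unfolding eventually_at_right_field using upg by (intro exI[of _ 1]) auto
  qed
  define nX where "nX = induced_norm (lp_norm p) a X"
  define nY where "nY = induced_norm (lp_norm p) b Y"
  have nX0: "0 \<le> nX" unfolding nX_def using VA.ind_nonneg X by auto
  have nY0: "0 \<le> nY" unfolding nY_def using VB.ind_nonneg Y by auto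
  have low: "fA e * fB e \<le> fK e + e * e * (nX * nY)" if e: "0 < e" for e
  proof -
    define T where "T = fK e + e * e * (nX * nY)"
    have T0: "0 \<le> T" unfolding T_def using fK0 nX0 nY0 by simp
    have key: "lp_norm p (u + e \<cdot>\<^sub>v (X *\<^sub>v u)) * lp_norm p (v + e \<cdot>\<^sub>v (Y *\<^sub>v v)) \<le> T * (lp_norm p u * lp_norm p v)"
      if u: "u \<in> carrier_vec a" and v: "v \<in> carrier_vec b" for u v
    proof -
      let ?w = "kv u v"
      have w: "?w \<in> carrier_vec (a * b)" using u v by (intro carrier_vecI) (simp only: kv_dim carrier_vecD)
      have Xu: "X *\<^sub>v u \<in> carrier_vec a" and Yv: "Y *\<^sub>v v \<in> carrier_vec b" using X Y u v by auto
      have w2: "kv (X *\<^sub>v u) (Y *\<^sub>v v) \<in> carrier_vec (a * b)" using Xu Yv by (intro carrier_vecI) (simp only: kv_dim carrier_vecD)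
      have KSw: "kron_sum X Y *\<^sub>v ?w \<in> carrier_vec (a * b)" using KS w by auto
      have "lp_norm p (u + e \<cdot>\<^sub>v (X *\<^sub>v u)) * lp_norm p (v + e \<cdot>\<^sub>v (Y *\<^sub>v v))
          = lp_norm p (kv (u + e \<cdot>\<^sub>v (X *\<^sub>v u)) (v + e \<cdot>\<^sub>v (Y *\<^sub>v v)))" using lp_kv[OF p] by simp
      also have "\<dots> = lp_norm p ((?w + e \<cdot>\<^sub>v (kron_sum X Y *\<^sub>v ?w)) + (e * e) \<cdot>\<^sub>v kv (X *\<^sub>v u) (Y *\<^sub>v v))"
        unfolding kv_identity[OF X Y u v] ..
      also have "\<dots> \<le> lp_norm p (?w + e \<cdot>\<^sub>v (kron_sum X Y *\<^sub>v ?w)) + lp_norm p ((e * e) \<cdot>\<^sub>v kv (X *\<^sub>v u) (Y *\<^sub>v v))"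
        using w KSw w2 by (intro VK.tri) auto
      also have "\<dots> = lp_norm p (?w + e \<cdot>\<^sub>v (kron_sum X Y *\<^sub>v ?w)) + (e * e) * (lp_norm p (X *\<^sub>v u) * lp_norm p (Y *\<^sub>v v))"
        using lp_homog[OF p] lp_kv[OF p] by simp
      also have "\<dots> \<le> fK e * lp_norm p ?w + (e * e) * ((nX * lp_norm p u) * (nY * lp_norm p v))"
      proof (intro add_mono mult_left_mono mult_mono)
        show "lp_norm p (?w + e \<cdot>\<^sub>v (kron_sum X Y *\<^sub>v ?w)) \<le> fK e * lp_norm p ?w"
          unfolding fK_def by (rule VK.f_mult[OF KS w])
        show "lp_norm p (X *\<^sub>v u) \<le> nX * lp_norm p u" unfolding nX_def by (rule VA.ind_mult[OF X u])
        show "lp_norm p (Y *\<^sub>v v) \<le> nY * lp_norm p v" unfolding nY_def by (rule VB.ind_mult[OF Y v])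
      qed (use lp_nonneg[OF p] nX0 nY0 in \<open>auto intro: mult_nonneg_nonneg\<close>)
      also have "\<dots> = T * (lp_norm p u * lp_norm p v)" unfolding T_def using lp_kv[OF p] by (simp add: algebra_simps)
      finally show ?thesis .
    qed
    have step1: "fA e * lp_norm p (v + e \<cdot>\<^sub>v (Y *\<^sub>v v)) \<le> T * lp_norm p v" if v: "v \<in> carrier_vec b" for v
    proof (cases "lp_norm p (v + e \<cdot>\<^sub>v (Y *\<^sub>v v)) = 0")
      case True
      then show ?thesis using T0 lp_nonneg[OF p] by simp
    next
      case False
      then have pos: "0 < lp_norm p (v + e \<cdot>\<^sub>v (Y *\<^sub>v v))" using lp_nonneg[OF p] by (simp add: order_less_le)
      have "fA e \<le> T * lp_norm p v / lp_norm p (v + e \<cdot>\<^sub>v (Y *\<^sub>v v))"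
        unfolding fA_def
      proof (rule VA.f_le[OF X])
        fix u :: "real vec" assume u: "u \<in> carrier_vec a"
        show "lp_norm p (u + e \<cdot>\<^sub>v (X *\<^sub>v u)) \<le> T * lp_norm p v / lp_norm p (v + e \<cdot>\<^sub>v (Y *\<^sub>v v)) * lp_norm p u"
          using key[OF u v] pos by (simp add: field_simps)
      qed
      then show ?thesis using pos by (simp add: field_simps)
    qed
    show ?thesis
    proof (cases "fA e = 0")
      case True
      then show ?thesis using T0 unfolding T_def by simp
    next
      case False
      then have pos: "0 < fA e" using fA0 by (simp add: order_less_le)
      have "fB e \<le> T / fA e"
        unfolding fB_def
      proof (rule VB.f_le[OF Y])
        fix v :: "real vec" assume v: "v \<in> carrier_vec b"
        show "lp_norm p (v + e \<cdot>\<^sub>v (Y *\<^sub>v v)) \<le> T / fA e * lp_norm p v"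
          using step1[OF v] pos by (simp add: field_simps)
      qed
      then show ?thesis using pos unfolding T_def by (simp add: field_simps)
    qed
  qed
  have lowg: "(fA e - 1) / e * fB e + (fB e - 1) / e - e * (nX * nY) \<le> (fK e - 1) / e" if e: "0 < e" for e
  proof -
    have "(fA e - 1) / e * fB e + (fB e - 1) / e - e * (nX * nY) = (fA e * fB e - e * e * (nX * nY) - 1) / e"
      using e by (simp add: field_simps)
    also have "\<dots> \<le> (fK e - 1) / e" using low[OF e] e by (intro divide_right_mono) auto
    finally show ?thesis .
  qed
  have tL: "((\<lambda>e. (fA e - 1) / e * fB e + (fB e - 1) / e - e * (nX * nY)) \<longlongrightarrow> mA * 1 + mB - 0 * (nX * nY)) (at_right 0)"
    by (intro tendsto_intros tA tB fB1)
  have le2: "mA + mB \<le> mK"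
  proof -
    have "mA * 1 + mB - 0 * (nX * nY) \<le> mK"
    proof (rule tendsto_le[OF trivial_limit_at_right_real tK tL])
      show "eventually (\<lambda>e. (fA e - 1) / e * fB e + (fB e - 1) / e - e * (nX * nY) \<le> (fK e - 1) / e) (at_right 0)"
        unfolding eventually_at_right_field using lowg by (intro exI[of _ 1]) auto
    qed
    then show ?thesis by simp
  qed
  show ?thesis using le1 le2 unfolding mA_def mB_def mK_def by simp
qed


definition off :: "(nat \<Rightarrow> nat) \<Rightarrow> nat \<Rightarrow> nat \<Rightarrow> nat" where
  "off d lo i = (\<Sum>j\<in>{lo..<i}. d j)"

lemma vec_block_off: "vec_block d lo i x = vec (d i) (\<lambda>t. x $ (off d lo i + t))"
  unfolding vec_block_def off_def ..

lemma off_Suc: "lo \<le> i \<Longrightarrow> off d lo (Suc i) = off d lo i + d i"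
  unfolding off_def by (simp add: sum.atLeastLessThan_Suc)

lemma off_mono: "i \<le> j \<Longrightarrow> off d lo i \<le> off d lo j"
  unfolding off_def by (intro sum_mono2) auto

lemma off_self[simp]: "off d lo lo = 0" unfolding off_def by simp

lemma off_shift: "lo < i \<Longrightarrow> off d lo i = d lo + off d (Suc lo) i"
  unfolding off_def by (simp add: sum.atLeast_Suc_lessThan)

lemma off_total: "lo \<le> i \<Longrightarrow> i < lo + n \<Longrightarrow> off d lo i + d i \<le> off d lo (lo + n)"
  using off_Suc[of lo i d] off_mono[of "Suc i" "lo + n" d lo] by simp

lemma vb_first: assumes "dim_vec u = d lo"
  shows "vec_block d lo lo (u @\<^sub>v w) = u"
  unfolding vec_block_off using assms by (intro eq_vecI) auto

lemma vb_rest: assumes u: "dim_vec u = d lo" and i: "lo < i" and w: "off d (Suc lo) i + d i \<le> dim_vec w"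
  shows "vec_block d lo i (u @\<^sub>v w) = vec_block d (Suc lo) i w"
proof (rule eq_vecI)
  fix t assume "t < dim_vec (vec_block d (Suc lo) i w)"
  then have t: "t < d i" unfolding vec_block_off by simp
  have "off d lo i + t = d lo + (off d (Suc lo) i + t)" using off_shift[OF i] by simp
  then show "vec_block d lo i (u @\<^sub>v w) $ t = vec_block d (Suc lo) i w $ t"
    unfolding vec_block_off using t u w by simp
qed (simp add: vec_block_off)

lemma diag_carrier:
  assumes "\<forall>i\<in>{lo..<lo+n}. F i \<in> carrier_mat (d i) (d i)"
  shows "diag_block_mat (map F [lo..<lo+n]) \<in> carrier_mat (off d lo (lo + n)) (off d lo (lo + n))"
proof -
  have "sum_list (map dim_row (map F [lo..<lo+n])) = off d lo (lo + n)"
    "sum_list (map dim_col (map F [lo..<lo+n])) = off d lo (lo + n)"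
    unfolding off_def sum_set_upt_conv_sum_list_nat[symmetric, simplified] map_map
    using assms by (auto intro!: sum.cong simp: sum_set_upt_conv_sum_list_nat[symmetric])
  then show ?thesis by (intro carrier_matI) (simp_all only: dim_diag_block_mat map_map)
qed

lemma diag_block_mult:
  assumes F: "\<forall>i\<in>{lo..<lo+n}. F i \<in> carrier_mat (d i) (d i)"
    and y: "y \<in> carrier_vec (off d lo (lo + n))" and i: "lo \<le> i" "i < lo + n"
  shows "vec_block d lo i (diag_block_mat (map F [lo..<lo+n]) *\<^sub>v y) = F i *\<^sub>v vec_block d lo i y"
  using assms
proof (induction n arbitrary: lo y)
  case 0
  then show ?case by simp
next
  case (Suc n)
  have L: "[lo..<lo + Suc n] = lo # [Suc lo..<Suc lo + n]" by (simp add: upt_conv_Cons)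
  let ?D' = "diag_block_mat (map F [Suc lo..<Suc lo + n])"
  let ?r' = "off d (Suc lo) (Suc lo + n)"
  have F': "\<forall>i\<in>{Suc lo..<Suc lo + n}. F i \<in> carrier_mat (d i) (d i)" using Suc.prems(1) by auto
  have D': "?D' \<in> carrier_mat ?r' ?r'" by (rule diag_carrier[OF F'])
  have Flo: "F lo \<in> carrier_mat (d lo) (d lo)" using Suc.prems(1) by auto
  have r: "off d lo (lo + Suc n) = d lo + ?r'" using off_shift[of lo "lo + Suc n" d] by simp
  have yc: "y \<in> carrier_vec (d lo + ?r')" using Suc.prems(2) r by simp
  define y1 where "y1 = vec_first y (d lo)"
  define y2 where "y2 = vec_last y ?r'"
  have y12: "y = y1 @\<^sub>v y2" unfolding y1_def y2_def using vec_first_last_append[OF yc] by simp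
  have y1c: "y1 \<in> carrier_vec (d lo)" and y2c: "y2 \<in> carrier_vec ?r'" unfolding y1_def y2_def by auto
  have Dy: "diag_block_mat (map F [lo..<lo + Suc n]) *\<^sub>v y = (F lo *\<^sub>v y1) @\<^sub>v (?D' *\<^sub>v y2)"
  proof -
    have "diag_block_mat (map F [lo..<lo + Suc n]) = four_block_mat (F lo) (0\<^sub>m (d lo) ?r') (0\<^sub>m ?r' (d lo)) ?D'"
      unfolding L using Flo D' by (simp add: Let_def)
    then show ?thesis unfolding y12 using mult_mat_vec_split[OF Flo D' y1c y2c] by simp
  qed
  show ?case
  proof (cases "i = lo")
    case True
    have "vec_block d lo i (diag_block_mat (map F [lo..<lo + Suc n]) *\<^sub>v y) = F lo *\<^sub>v y1"
      unfolding Dy True using Flo by (intro vb_first) simp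
    moreover have "vec_block d lo i y = y1" unfolding y12 True using y1c by (intro vb_first) simp
    ultimately show ?thesis using True by simp
  next
    case False
    then have i': "lo < i" "Suc lo \<le> i" "i < Suc lo + n" using Suc.prems by auto
    have bnd: "off d (Suc lo) i + d i \<le> ?r'" using off_total[OF i'(2,3)] .
    have "vec_block d lo i (diag_block_mat (map F [lo..<lo + Suc n]) *\<^sub>v y) = vec_block d (Suc lo) i (?D' *\<^sub>v y2)"
      unfolding Dy using Flo D' bnd by (intro vb_rest i'(1)) auto
    also have "\<dots> = F i *\<^sub>v vec_block d (Suc lo) i y2" using Suc.IH[OF F' y2c i'(2,3)] .
    also have "vec_block d (Suc lo) i y2 = vec_block d lo i y" unfolding y12 using y1c y2c bnd
      by (intro vb_rest[symmetric] i'(1)) auto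
    finally show ?thesis .
  qed
qed


lemma tendsto_Max_fin:
  fixes h :: "'i \<Rightarrow> 'x \<Rightarrow> real" and l :: "'i \<Rightarrow> real"
  assumes "finite S" "S \<noteq> {}" "\<And>i. i \<in> S \<Longrightarrow> ((\<lambda>x. h i x) \<longlongrightarrow> l i) F"
  shows "((\<lambda>x. Max ((\<lambda>i. h i x) ` S)) \<longlongrightarrow> Max (l ` S)) F"
  using assms
proof (induction S rule: finite_ne_induct)
  case (singleton x)
  then show ?case by simp
next
  case (insert x S)
  have "((\<lambda>y. max (h x y) (Max ((\<lambda>i. h i y) ` S))) \<longlongrightarrow> max (l x) (Max (l ` S))) F"
  proof -
    have IH: "((\<lambda>y. Max ((\<lambda>i. h i y) ` S)) \<longlongrightarrow> Max (l ` S)) F" using insert by auto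
    have hx: "((\<lambda>y. h x y) \<longlongrightarrow> l x) F" using insert by auto
    show ?thesis by (rule tendsto_max[OF hx IH])
  qed
  then show ?case using insert by simp
qed

definition ND :: "(real vec \<Rightarrow> real) \<Rightarrow> (nat \<Rightarrow> ereal) \<Rightarrow> (nat \<Rightarrow> nat) \<Rightarrow> nat \<Rightarrow> nat \<Rightarrow> real vec \<Rightarrow> real" where
  "ND N0 p d lo n y = N0 (vec n (\<lambda>j. lp_norm (p (lo + j)) (vec_block d lo (lo + j) y)))"

lemma vb_add: assumes "x \<in> carrier_vec r" "w \<in> carrier_vec r" "off d lo i + d i \<le> r"
  shows "vec_block d lo i (x + c \<cdot>\<^sub>v w) = vec_block d lo i x + c \<cdot>\<^sub>v vec_block d lo i w"
  unfolding vec_block_off using assms by (intro eq_vecI) auto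

lemma vb_zero: "vec_block d lo i (0\<^sub>v r) = 0\<^sub>v (d i)" if "off d lo i + d i \<le> r"
  unfolding vec_block_off using that by (intro eq_vecI) auto

locale blk =
  fixes N0 :: "real vec \<Rightarrow> real" and p :: "nat \<Rightarrow> ereal" and d :: "nat \<Rightarrow> nat" and lo n :: nat
    and F :: "nat \<Rightarrow> real mat"
  assumes N0: "monotonic_norm n N0" and n: "0 < n"
    and p: "\<forall>i\<in>{lo..<lo+n}. 1 \<le> p i"
    and d: "\<forall>i\<in>{lo..<lo+n}. 0 < d i"
    and F: "\<forall>i\<in>{lo..<lo+n}. F i \<in> carrier_mat (d i) (d i)"
begin

abbreviation "r \<equiv> off d lo (lo + n)"
abbreviation "D \<equiv> diag_block_mat (map F [lo..<lo+n])"
abbreviation "NB \<equiv> ND N0 p d lo n"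
abbreviation "I \<equiv> {lo..<lo+n}"

lemma Dc: "D \<in> carrier_mat r r" using diag_carrier[OF F] .

lemma N0_homog: "x \<in> carrier_vec n \<Longrightarrow> N0 (c \<cdot>\<^sub>v x) = \<bar>c\<bar> * N0 x"
  using N0 unfolding monotonic_norm_def is_vec_norm_def by blast

lemma N0_nonneg: "x \<in> carrier_vec n \<Longrightarrow> 0 \<le> N0 x"
  using N0 unfolding monotonic_norm_def is_vec_norm_def by blast

lemma N0_pos: "x \<in> carrier_vec n \<Longrightarrow> x \<noteq> 0\<^sub>v n \<Longrightarrow> 0 < N0 x"
  using N0 unfolding monotonic_norm_def is_vec_norm_def by (metis order_le_less)

lemma N0_mono: "u \<in> carrier_vec n \<Longrightarrow> v \<in> carrier_vec n \<Longrightarrow> (\<forall>j<n. \<bar>u $ j\<bar> \<le> \<bar>v $ j\<bar>) \<Longrightarrow> N0 u \<le> N0 v"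
  using N0 unfolding monotonic_norm_def by blast

lemma bnd: "i \<in> I \<Longrightarrow> off d lo i + d i \<le> r" using off_total by auto

lemma V: "i \<in> I \<Longrightarrow> vnorm (d i) (lp_norm (p i))" using vnorm_lp p d by auto

abbreviation "fi e i \<equiv> induced_norm (lp_norm (p i)) (d i) (1\<^sub>m (d i) + e \<cdot>\<^sub>m F i)"

lemma fi_nonneg: "i \<in> I \<Longrightarrow> 0 \<le> fi e i"
  using vnorm.ind_nonneg[OF V] F by auto

lemma blockT: assumes y: "y \<in> carrier_vec r" and i: "i \<in> I"
  shows "vec_block d lo i ((1\<^sub>m r + e \<cdot>\<^sub>m D) *\<^sub>v y) = (1\<^sub>m (d i) + e \<cdot>\<^sub>m F i) *\<^sub>v vec_block d lo i y"
proof -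
  have Fi: "F i \<in> carrier_mat (d i) (d i)" using F i by auto
  have vb: "vec_block d lo i y \<in> carrier_vec (d i)" unfolding vec_block_off by simp
  have "vec_block d lo i ((1\<^sub>m r + e \<cdot>\<^sub>m D) *\<^sub>v y) = vec_block d lo i (y + e \<cdot>\<^sub>v (D *\<^sub>v y))"
    using Tv[OF Dc y] by simp
  also have "\<dots> = vec_block d lo i y + e \<cdot>\<^sub>v vec_block d lo i (D *\<^sub>v y)"
    using y Dc bnd[OF i] by (intro vb_add) auto
  also have "vec_block d lo i (D *\<^sub>v y) = F i *\<^sub>v vec_block d lo i y"
    using diag_block_mult[OF F y] i by auto
  finally show ?thesis using Tv[OF Fi vb] by simp
qed

abbreviation "Mx e \<equiv> Max (fi e ` I)"

lemma Mx_ge: "i \<in> I \<Longrightarrow> fi e i \<le> Mx e" by (intro Max_ge) auto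

lemma Mx_nonneg: "0 \<le> Mx e"
proof -
  have "lo \<in> I" using n by auto
  then show ?thesis using fi_nonneg Mx_ge order_trans by blast
qed

lemma vecc: "vec n h \<in> carrier_vec n" by simp

lemma upper: assumes y: "y \<in> carrier_vec r"
  shows "NB ((1\<^sub>m r + e \<cdot>\<^sub>m D) *\<^sub>v y) \<le> Mx e * NB y"
proof -
  have "NB ((1\<^sub>m r + e \<cdot>\<^sub>m D) *\<^sub>v y) \<le> N0 (Mx e \<cdot>\<^sub>v vec n (\<lambda>j. lp_norm (p (lo + j)) (vec_block d lo (lo + j) y)))"
    unfolding ND_def
  proof (rule N0_mono[OF vecc])
    show "Mx e \<cdot>\<^sub>v vec n (\<lambda>j. lp_norm (p (lo + j)) (vec_block d lo (lo + j) y)) \<in> carrier_vec n" by simp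
    show "\<forall>j<n. \<bar>vec n (\<lambda>j. lp_norm (p (lo + j)) (vec_block d lo (lo + j) ((1\<^sub>m r + e \<cdot>\<^sub>m D) *\<^sub>v y))) $ j\<bar>
        \<le> \<bar>(Mx e \<cdot>\<^sub>v vec n (\<lambda>j. lp_norm (p (lo + j)) (vec_block d lo (lo + j) y))) $ j\<bar>"
    proof (intro allI impI)
      fix j assume j: "j < n"
      have i: "lo + j \<in> I" using j by auto
      have Fi: "F (lo + j) \<in> carrier_mat (d (lo + j)) (d (lo + j))" using F i by auto
      have pj: "1 \<le> p (lo + j)" using p i by auto
      have vb: "vec_block d lo (lo + j) y \<in> carrier_vec (d (lo + j))" unfolding vec_block_off by simp
      have "lp_norm (p (lo + j)) (vec_block d lo (lo + j) ((1\<^sub>m r + e \<cdot>\<^sub>m D) *\<^sub>v y))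
          = lp_norm (p (lo + j)) ((1\<^sub>m (d (lo + j)) + e \<cdot>\<^sub>m F (lo + j)) *\<^sub>v vec_block d lo (lo + j) y)"
        using blockT[OF y i] by simp
      also have "\<dots> \<le> fi e (lo + j) * lp_norm (p (lo + j)) (vec_block d lo (lo + j) y)"
        using vnorm.ind_mult[OF V[OF i] _ vb] Fi by auto
      also have "\<dots> \<le> Mx e * lp_norm (p (lo + j)) (vec_block d lo (lo + j) y)"
        using Mx_ge[OF i] lp_nonneg[OF pj] by (intro mult_right_mono) auto
      finally show "\<bar>vec n (\<lambda>j. lp_norm (p (lo + j)) (vec_block d lo (lo + j) ((1\<^sub>m r + e \<cdot>\<^sub>m D) *\<^sub>v y))) $ j\<bar>
        \<le> \<bar>(Mx e \<cdot>\<^sub>v vec n (\<lambda>j. lp_norm (p (lo + j)) (vec_block d lo (lo + j) y))) $ j\<bar>"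
        using j lp_nonneg[OF pj] Mx_nonneg by simp
    qed
  qed
  also have "\<dots> = Mx e * NB y" unfolding ND_def using N0_homog[OF vecc] Mx_nonneg by simp
  finally show ?thesis .
qed

end


context blk begin

lemma emb: assumes i: "i \<in> I" and z: "z \<in> carrier_vec (d i)"
  obtains y where "y \<in> carrier_vec r" "vec_block d lo i y = z"
    "\<And>j. j \<in> I \<Longrightarrow> j \<noteq> i \<Longrightarrow> vec_block d lo j y = 0\<^sub>v (d j)"
proof -
  let ?o = "off d lo i"
  define y where "y = vec r (\<lambda>t. if ?o \<le> t \<and> t < ?o + d i then z $ (t - ?o) else 0)"
  have yc: "y \<in> carrier_vec r" unfolding y_def by simp
  have "vec_block d lo i y = z"
    unfolding vec_block_off y_def using z bnd[OF i] by (intro eq_vecI) auto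
  moreover have "vec_block d lo j y = 0\<^sub>v (d j)" if j: "j \<in> I" "j \<noteq> i" for j
  proof (rule eq_vecI)
    fix t assume "t < dim_vec (0\<^sub>v (d j) :: real vec)"
    then have t: "t < d j" by simp
    have tr: "off d lo j + t < r" using bnd[OF j(1)] t by simp
    have "\<not> (?o \<le> off d lo j + t \<and> off d lo j + t < ?o + d i)"
    proof (cases "j < i")
      case True
      have "off d lo j + t < off d lo (Suc j)" using off_Suc[of lo j d] j t by auto
      also have "\<dots> \<le> ?o" using True by (intro off_mono) auto
      finally show ?thesis by simp
    next
      case False
      then have "i < j" using j by simp
      then have "off d lo (Suc i) \<le> off d lo j" by (intro off_mono) auto
      then show ?thesis using off_Suc[of lo i d] i by auto
    qed
    then show "vec_block d lo j y $ t = 0\<^sub>v (d j) $ t" unfolding vec_block_off y_def using t tr by auto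
  qed (simp add: vec_block_off)
  ultimately show ?thesis using that yc by blast
qed

lemma ND_single: assumes i: "i \<in> I" and c: "0 \<le> c"
  and bl: "\<And>j. j \<in> I \<Longrightarrow> lp_norm (p j) (vec_block d lo j w) = (if j = i then c else 0)"
  shows "NB w = c * N0 (unit_vec n (i - lo))"
proof -
  have "vec n (\<lambda>j. lp_norm (p (lo + j)) (vec_block d lo (lo + j) w)) = c \<cdot>\<^sub>v unit_vec n (i - lo)"
  proof (rule eq_vecI)
    fix j assume "j < dim_vec (c \<cdot>\<^sub>v unit_vec n (i - lo))"
    then have j: "j < n" by simp
    have "lo + j \<in> I" using j by auto
    moreover have "(lo + j = i) = (j = i - lo)" using i by auto
    moreover have "i - lo < n" using i by auto
    ultimately show "vec n (\<lambda>j. lp_norm (p (lo + j)) (vec_block d lo (lo + j) w)) $ j = (c \<cdot>\<^sub>v unit_vec n (i - lo)) $ j"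
      using bl[of "lo + j"] j by simp
  qed simp
  then show ?thesis unfolding ND_def using N0_homog[of "unit_vec n (i - lo)" c] c by simp
qed

lemma unit_pos: assumes "i \<in> I" shows "0 < N0 (unit_vec n (i - lo))"
proof -
  have "i - lo < n" using assms by auto
  then have "unit_vec n (i - lo) \<noteq> (0\<^sub>v n :: real vec)" by (simp add: unit_vec_eq)
  then show ?thesis by (intro N0_pos) auto
qed

lemma ind_eq: "induced_norm NB r (1\<^sub>m r + e \<cdot>\<^sub>m D) = Mx e"
proof -
  define R where "R = {NB ((1\<^sub>m r + e \<cdot>\<^sub>m D) *\<^sub>v y) / NB y | y. y \<in> carrier_vec r \<and> y \<noteq> 0\<^sub>v r}"
  have ind: "induced_norm NB r (1\<^sub>m r + e \<cdot>\<^sub>m D) = Sup R" unfolding induced_norm_def R_def ..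
  have NBnn: "0 \<le> NB y" for y unfolding ND_def by (rule N0_nonneg) simp
  have le: "x \<le> Mx e" if "x \<in> R" for x
  proof -
    obtain y where y: "y \<in> carrier_vec r" "x = NB ((1\<^sub>m r + e \<cdot>\<^sub>m D) *\<^sub>v y) / NB y" using \<open>x \<in> R\<close> R_def by blast
    show ?thesis
    proof (cases "NB y = 0")
      case True then show ?thesis using y Mx_nonneg by simp
    next
      case False
      then have "0 < NB y" using NBnn[of y] by simp
      then show ?thesis using y upper[OF y(1)] by (simp add: divide_le_eq)
    qed
  qed
  have lo: "lo \<in> I" using n by auto
  have "0 < d lo" using d lo by blast
  then have rpos: "0 < r" using bnd[OF lo] by linarith
  have Rne: "R \<noteq> {}" unfolding R_def using rpos by (auto intro!: exI[of _ "unit_vec r 0"] simp: unit_vec_eq)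
  have bdd: "bdd_above R" using le by (intro bdd_aboveI) auto
  have sup_le: "Sup R \<le> Mx e" using le Rne by (intro cSup_least) auto
  have fi_le: "fi e i \<le> Sup R" if i: "i \<in> I" for i
  proof -
    interpret Vi: vnorm "d i" "lp_norm (p i)" using V[OF i] .
    have Fi: "F i \<in> carrier_mat (d i) (d i)" using F i by auto
    have pi: "1 \<le> p i" using p i by auto
    show ?thesis
    proof (rule Vi.ind_le)
      fix z :: "real vec" assume z: "z \<in> carrier_vec (d i)"
      show "lp_norm (p i) ((1\<^sub>m (d i) + e \<cdot>\<^sub>m F i) *\<^sub>v z) \<le> Sup R * lp_norm (p i) z"
      proof (cases "z = 0\<^sub>v (d i)")
        case True
        have "(1\<^sub>m (d i) + e \<cdot>\<^sub>m F i) *\<^sub>v z = 0\<^sub>v (d i)" using True Fi by auto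
        then show ?thesis using True lp_zero_vec[OF pi] by simp
      next
        case znz: False
        obtain y where y: "y \<in> carrier_vec r" "vec_block d lo i y = z"
          "\<And>j. j \<in> I \<Longrightarrow> j \<noteq> i \<Longrightarrow> vec_block d lo j y = 0\<^sub>v (d j)" using emb[OF i z] by blast
        have ynz: "y \<noteq> 0\<^sub>v r" using y(2) znz vb_zero[OF bnd[OF i]] by auto
        have zpos: "0 < lp_norm (p i) z" using Vi.pos[OF z znz] .
        have NBy: "NB y = lp_norm (p i) z * N0 (unit_vec n (i - lo))"
        proof (rule ND_single[OF i])
          show "0 \<le> lp_norm (p i) z" using zpos by simp
          fix j assume j: "j \<in> I"
          show "lp_norm (p j) (vec_block d lo j y) = (if j = i then lp_norm (p i) z else 0)"
            using y j lp_zero_vec p by auto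
        qed
        have NBTy: "NB ((1\<^sub>m r + e \<cdot>\<^sub>m D) *\<^sub>v y) = lp_norm (p i) ((1\<^sub>m (d i) + e \<cdot>\<^sub>m F i) *\<^sub>v z) * N0 (unit_vec n (i - lo))"
        proof (rule ND_single[OF i])
          show "0 \<le> lp_norm (p i) ((1\<^sub>m (d i) + e \<cdot>\<^sub>m F i) *\<^sub>v z)" using lp_nonneg[OF pi] .
          fix j assume j: "j \<in> I"
          show "lp_norm (p j) (vec_block d lo j ((1\<^sub>m r + e \<cdot>\<^sub>m D) *\<^sub>v y)) = (if j = i then lp_norm (p i) ((1\<^sub>m (d i) + e \<cdot>\<^sub>m F i) *\<^sub>v z) else 0)"
          proof (cases "j = i")
            case True then show ?thesis using blockT[OF y(1) j] y(2) by simp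
          next
            case False
            have Fj: "F j \<in> carrier_mat (d j) (d j)" using F j by auto
            have "(1\<^sub>m (d j) + e \<cdot>\<^sub>m F j) *\<^sub>v 0\<^sub>v (d j) = 0\<^sub>v (d j)" using Fj by auto
            then show ?thesis using blockT[OF y(1) j] y(3)[OF j False] False lp_zero_vec p j by auto
          qed
        qed
        have up: "N0 (unit_vec n (i - lo)) > 0" using unit_pos[OF i] .
        have "NB ((1\<^sub>m r + e \<cdot>\<^sub>m D) *\<^sub>v y) / NB y \<in> R" unfolding R_def using y(1) ynz by blast
        then have "NB ((1\<^sub>m r + e \<cdot>\<^sub>m D) *\<^sub>v y) / NB y \<le> Sup R" using bdd by (intro cSup_upper)
        then have "lp_norm (p i) ((1\<^sub>m (d i) + e \<cdot>\<^sub>m F i) *\<^sub>v z) / lp_norm (p i) z \<le> Sup R"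
          unfolding NBy NBTy using up by simp
        then show ?thesis using zpos by (simp add: divide_le_eq)
      qed
    qed
  qed
  have "Mx e \<le> Sup R" using fi_le lo by (subst Max_le_iff) auto
  then show ?thesis unfolding ind using sup_le by simp
qed

lemma meas_blk: "matrix_measure NB r D = Max ((\<lambda>i. matrix_measure (lp_norm (p i)) (d i) (F i)) ` I)"
proof -
  have lo: "lo \<in> I" using n by auto
  have T: "((\<lambda>e. Max ((\<lambda>i. (fi e i - 1) / e) ` I)) \<longlongrightarrow> Max ((\<lambda>i. matrix_measure (lp_norm (p i)) (d i) (F i)) ` I)) (at_right 0)"
  proof (rule tendsto_Max_fin)
    fix i assume i: "i \<in> I"
    show "((\<lambda>e. (fi e i - 1) / e) \<longlongrightarrow> matrix_measure (lp_norm (p i)) (d i) (F i)) (at_right 0)"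
      using vnorm.meas_tendsto[OF V[OF i]] F i by auto
  qed (use lo in auto)
  have ev: "eventually (\<lambda>e. Max ((\<lambda>i. (fi e i - 1) / e) ` I) = (induced_norm NB r (1\<^sub>m r + e \<cdot>\<^sub>m D) - 1) / e) (at_right 0)"
    unfolding eventually_at_right_field
  proof (intro exI[of _ 1] conjI allI impI)
    fix e :: real assume e: "0 < e" "e < 1"
    have mono: "mono (\<lambda>x::real. (x - 1) / e)" using e by (intro monoI) (simp add: divide_right_mono)
    have "(Mx e - 1) / e = Max ((\<lambda>x. (x - 1) / e) ` (fi e ` I))" using lo by (intro mono_Max_commute[OF mono]) auto
    then show "Max ((\<lambda>i. (fi e i - 1) / e) ` I) = (induced_norm NB r (1\<^sub>m r + e \<cdot>\<^sub>m D) - 1) / e"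
      unfolding ind_eq by (simp add: image_image)
  qed simp
  have "((\<lambda>e. (induced_norm NB r (1\<^sub>m r + e \<cdot>\<^sub>m D) - 1) / e) \<longlongrightarrow> Max ((\<lambda>i. matrix_measure (lp_norm (p i)) (d i) (F i)) ` I)) (at_right 0)"
    by (rule Lim_transform_eventually[OF T ev])
  then show ?thesis unfolding matrix_measure_def by (intro tendsto_Lim) auto
qed

end


lemma sum_choose_lt: "(\<Sum>t<N. t choose k) = N choose Suc k"
  by (induction N) auto

lemma sum_choose_aux: "(\<Sum>a\<in>{lo..<hi}. (hi - Suc a) choose k) = (hi - lo) choose Suc k"
proof -
  have "(\<Sum>a\<in>{lo..<hi}. (hi - Suc a) choose k) = (\<Sum>t<hi - lo. (hi - lo - Suc t) choose k)"
    by (rule sum.reindex_bij_witness[of _ "\<lambda>t. lo + t" "\<lambda>a. a - lo"]) auto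
  also have "\<dots> = (\<Sum>t<hi - lo. t choose k)" by (rule sum.nat_diff_reindex)
  finally show ?thesis by (simp add: sum_choose_lt)
qed

lemma len_ksubs_from: "length (ksubs_from k lo hi) = (hi - lo) choose k"
proof (induction k arbitrary: lo)
  case 0
  then show ?case by simp
next
  case (Suc k)
  have "length (ksubs_from (Suc k) lo hi) = sum_list (map (\<lambda>a. (hi - Suc a) choose k) [lo..<hi])"
    by (simp add: length_concat o_def Suc.IH)
  also have "\<dots> = (\<Sum>a\<in>{lo..<hi}. (hi - Suc a) choose k)"
    by (simp add: sum_set_upt_conv_sum_list_nat[symmetric])
  finally show ?case by (simp add: sum_choose_aux)
qed

lemma add_compound_carrier: assumes "A \<in> carrier_mat n n"
  shows "add_compound j A \<in> carrier_mat (n choose j) (n choose j)"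
proof (cases "j = 0")
  case True then show ?thesis unfolding add_compound_def by simp
next
  case False
  have "length (ksubs j (dim_row A)) = n choose j" using assms unfolding ksubs_def by (simp add: len_ksubs_from)
  then show ?thesis using False unfolding add_compound_def by simp
qed

lemma vandermonde_range:
  assumes "k \<le> n + m"
  shows "(\<Sum>i\<in>{k - n..min m k}. (n choose (k - i)) * (m choose i)) = (n + m) choose k"
proof -
  have "(\<Sum>i\<le>k. (n choose (k - i)) * (m choose i)) = (\<Sum>i\<in>{k - n..min m k}. (n choose (k - i)) * (m choose i))"
  proof (rule sum.mono_neutral_right)
    show "{k - n..min m k} \<subseteq> {..k}" by auto
    show "\<forall>i\<in>{..k} - {k - n..min m k}. (n choose (k - i)) * (m choose i) = 0"
    proof
      fix i assume i: "i \<in> {..k} - {k - n..min m k}"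
      then have "i < k - n \<or> m < i" by auto
      then show "(n choose (k - i)) * (m choose i) = 0"
      proof
        assume "i < k - n" then have "n < k - i" by auto
        then show ?thesis by simp
      next
        assume "m < i" then show ?thesis by simp
      qed
    qed
  qed simp
  also have "(\<Sum>i\<le>k. (n choose (k - i)) * (m choose i)) = (m + n) choose k"
    using vandermonde[of m n k] by (simp add: mult.commute)
  finally show ?thesis by (simp add: add.commute)
qed

lemma perm_inverse:
  assumes P: "P \<in> carrier_mat r r" and perm: "permutation_mat r P"
  shows "P * mat_inv P = 1\<^sub>m r" "mat_inv P * P = 1\<^sub>m r" "mat_inv P \<in> carrier_mat r r"
proof -
  obtain \<sigma> where s: "\<sigma> permutes {..<r}" and Pd: "P = mat r r (\<lambda>(i, j). if i = \<sigma> j then 1 else 0)"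
    using perm unfolding permutation_mat_def by blast
  have sl: "\<sigma> l < r" if "l < r" for l using permutes_in_image[OF s] that by auto
  have PPt: "P * transpose_mat P = 1\<^sub>m r"
  proof (rule eq_matI)
    fix i j assume ij: "i < dim_row (1\<^sub>m r :: real mat)" "j < dim_col (1\<^sub>m r :: real mat)"
    then have ij': "i < r" "j < r" by auto
    have "(P * transpose_mat P) $$ (i, j) = (\<Sum>l<r. (if i = \<sigma> l then 1 else 0) * (if j = \<sigma> l then 1 else 0))"
      using ij' unfolding Pd by (simp add: scalar_prod_def lessThan_atLeast0)
    also have "\<dots> = (\<Sum>l<r. (if i = l then 1 else 0) * (if j = l then (1::real) else 0))"
      using sum.permute[OF s, of "\<lambda>l. (if i = l then 1 else 0) * (if j = l then (1::real) else 0)"]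
      by (simp add: o_def)
    also have "\<dots> = (\<Sum>l<r. if l = i then (if j = i then 1 else 0) else 0)" by (intro sum.cong) auto
    also have "\<dots> = 1\<^sub>m r $$ (i, j)" using ij' by (simp add: sum.delta)
    finally show "(P * transpose_mat P) $$ (i, j) = 1\<^sub>m r $$ (i, j)" .
  qed (use Pd in auto)
  have PtP: "transpose_mat P * P = 1\<^sub>m r"
  proof (rule eq_matI)
    fix i j assume ij: "i < dim_row (1\<^sub>m r :: real mat)" "j < dim_col (1\<^sub>m r :: real mat)"
    then have ij': "i < r" "j < r" by auto
    have "(transpose_mat P * P) $$ (i, j) = (\<Sum>l<r. (if l = \<sigma> i then 1 else 0) * (if l = \<sigma> j then 1 else 0))"
      using ij' unfolding Pd by (simp add: scalar_prod_def lessThan_atLeast0)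
    also have "\<dots> = (\<Sum>l<r. if l = \<sigma> i then (if \<sigma> i = \<sigma> j then 1 else 0) else (0::real))" by (intro sum.cong) auto
    also have "\<dots> = (if \<sigma> i = \<sigma> j then 1 else 0)" using sl[OF ij'(1)] by (simp add: sum.delta)
    also have "\<dots> = 1\<^sub>m r $$ (i, j)" using ij' permutes_inj[OF s] by (auto dest: injD)
    finally show "(transpose_mat P * P) $$ (i, j) = 1\<^sub>m r $$ (i, j)" .
  qed (use Pd in auto)
  have U: "P \<in> Units (ring_mat TYPE(real) r ())"
    unfolding Units_def ring_mat_simps using P PPt PtP
    by (auto intro!: bexI[of _ "transpose_mat P"])
  obtain Q where Q: "mat_inverse P = Some Q"
  proof (cases "mat_inverse P")
    case None
    then have "P \<notin> Units (ring_mat TYPE(real) r ())" by (rule mat_inverse(1)[OF P, where b = "()"])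
    then show ?thesis using U by blast
  qed
  have "P * Q = 1\<^sub>m r \<and> Q * P = 1\<^sub>m r \<and> Q \<in> carrier_mat r r" by (rule mat_inverse(2)[OF P Q])
  moreover have "mat_inv P = Q" unfolding mat_inv_def Q by simp
  ultimately show "P * mat_inv P = 1\<^sub>m r" "mat_inv P * P = 1\<^sub>m r" "mat_inv P \<in> carrier_mat r r" by auto
qed

lemma change_var:
  assumes P: "P \<in> carrier_mat r r" and Q: "Q \<in> carrier_mat r r" and PQ: "P * Q = 1\<^sub>m r" and QP: "Q * P = 1\<^sub>m r"
    and D: "D \<in> carrier_mat r r" and C: "C = P * D * Q"
  shows "matrix_measure (\<lambda>x. N (Q *\<^sub>v x)) r C = matrix_measure N r D"
proof -
  have Cc: "C \<in> carrier_mat r r" using C P D Q by auto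
  have key: "Q *\<^sub>v ((1\<^sub>m r + e \<cdot>\<^sub>m C) *\<^sub>v x) = (1\<^sub>m r + e \<cdot>\<^sub>m D) *\<^sub>v (Q *\<^sub>v x)" if x: "x \<in> carrier_vec r" for x e
  proof -
    have Qx: "Q *\<^sub>v x \<in> carrier_vec r" using Q x by auto
    have DQx: "D *\<^sub>v (Q *\<^sub>v x) \<in> carrier_vec r" using D Qx by auto
    have Cx: "C *\<^sub>v x = P *\<^sub>v (D *\<^sub>v (Q *\<^sub>v x))" unfolding C using P D Q x
      by (simp add: assoc_mult_mat_vec[of _ r r _ r] )
    have QCx: "Q *\<^sub>v (C *\<^sub>v x) = D *\<^sub>v (Q *\<^sub>v x)"
    proof -
      have "Q *\<^sub>v (P *\<^sub>v (D *\<^sub>v (Q *\<^sub>v x))) = (Q * P) *\<^sub>v (D *\<^sub>v (Q *\<^sub>v x))"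
        using assoc_mult_mat_vec[OF Q P DQx] by simp
      then show ?thesis unfolding Cx QP using DQx by simp
    qed
    have "Q *\<^sub>v ((1\<^sub>m r + e \<cdot>\<^sub>m C) *\<^sub>v x) = Q *\<^sub>v (x + e \<cdot>\<^sub>v (C *\<^sub>v x))" using Tv[OF Cc x] by simp
    also have "\<dots> = Q *\<^sub>v x + e \<cdot>\<^sub>v (Q *\<^sub>v (C *\<^sub>v x))"
      using Q x Cc by (simp add: mult_add_distrib_mat_vec[of Q r r x] mult_mat_vec[OF Q])
    also have "\<dots> = (1\<^sub>m r + e \<cdot>\<^sub>m D) *\<^sub>v (Q *\<^sub>v x)" unfolding QCx using Tv[OF D Qx] by simp
    finally show ?thesis .
  qed
  have sets: "{N (Q *\<^sub>v ((1\<^sub>m r + e \<cdot>\<^sub>m C) *\<^sub>v x)) / N (Q *\<^sub>v x) | x. x \<in> carrier_vec r \<and> x \<noteq> 0\<^sub>v r}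
      = {N ((1\<^sub>m r + e \<cdot>\<^sub>m D) *\<^sub>v y) / N y | y. y \<in> carrier_vec r \<and> y \<noteq> 0\<^sub>v r}" for e
  proof (intro equalityI subsetI)
    fix z assume "z \<in> {N (Q *\<^sub>v ((1\<^sub>m r + e \<cdot>\<^sub>m C) *\<^sub>v x)) / N (Q *\<^sub>v x) | x. x \<in> carrier_vec r \<and> x \<noteq> 0\<^sub>v r}"
    then obtain x where x: "x \<in> carrier_vec r" "x \<noteq> 0\<^sub>v r" "z = N (Q *\<^sub>v ((1\<^sub>m r + e \<cdot>\<^sub>m C) *\<^sub>v x)) / N (Q *\<^sub>v x)" by blast
    have Qx: "Q *\<^sub>v x \<in> carrier_vec r" using Q x by auto
    have "Q *\<^sub>v x \<noteq> 0\<^sub>v r"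
    proof
      assume "Q *\<^sub>v x = 0\<^sub>v r"
      then have "P *\<^sub>v (Q *\<^sub>v x) = 0\<^sub>v r" using P by auto
      moreover have "P *\<^sub>v (Q *\<^sub>v x) = x" using assoc_mult_mat_vec[OF P Q x(1)] PQ x by simp
      ultimately show False using x by simp
    qed
    then show "z \<in> {N ((1\<^sub>m r + e \<cdot>\<^sub>m D) *\<^sub>v y) / N y | y. y \<in> carrier_vec r \<and> y \<noteq> 0\<^sub>v r}"
      using x key[OF x(1)] Qx by auto
  next
    fix z assume "z \<in> {N ((1\<^sub>m r + e \<cdot>\<^sub>m D) *\<^sub>v y) / N y | y. y \<in> carrier_vec r \<and> y \<noteq> 0\<^sub>v r}"
    then obtain y where y: "y \<in> carrier_vec r" "y \<noteq> 0\<^sub>v r" "z = N ((1\<^sub>m r + e \<cdot>\<^sub>m D) *\<^sub>v y) / N y" by blast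
    have Py: "P *\<^sub>v y \<in> carrier_vec r" using P y by auto
    have QPy: "Q *\<^sub>v (P *\<^sub>v y) = y" using assoc_mult_mat_vec[OF Q P y(1)] QP y by simp
    have "P *\<^sub>v y \<noteq> 0\<^sub>v r"
    proof
      assume "P *\<^sub>v y = 0\<^sub>v r"
      then have "Q *\<^sub>v (P *\<^sub>v y) = 0\<^sub>v r" using Q by auto
      then show False using QPy y by simp
    qed
    moreover have "z = N (Q *\<^sub>v ((1\<^sub>m r + e \<cdot>\<^sub>m C) *\<^sub>v (P *\<^sub>v y))) / N (Q *\<^sub>v (P *\<^sub>v y))"
      unfolding key[OF Py] QPy y(3) ..
    ultimately show "z \<in> {N (Q *\<^sub>v ((1\<^sub>m r + e \<cdot>\<^sub>m C) *\<^sub>v x)) / N (Q *\<^sub>v x) | x. x \<in> carrier_vec r \<and> x \<noteq> 0\<^sub>v r}"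
      using Py by blast
  qed
  have "induced_norm (\<lambda>x. N (Q *\<^sub>v x)) r (1\<^sub>m r + e \<cdot>\<^sub>m C) = induced_norm N r (1\<^sub>m r + e \<cdot>\<^sub>m D)" for e
    unfolding induced_norm_def using sets[of e] by simp
  then show ?thesis unfolding matrix_measure_def by simp
qed

theorem corollary1:
  fixes A B P :: "real mat" and n m k :: nat and p :: "nat \<Rightarrow> ereal"
    and N0 :: "real vec \<Rightarrow> real"
  assumes "n \<ge> 1" and "m \<ge> 1"
    and A: "A \<in> carrier_mat n n" and B: "B \<in> carrier_mat m m"
    and k: "1 \<le> k" "k \<le> n + m"
    and p: "\<forall>i\<in>{k - n..min m k}. 1 \<le> p i"
    and N0: "monotonic_norm (min m k - (k - n) + 1) N0"
    and P: "P \<in> carrier_mat ((n + m) choose k) ((n + m) choose k)"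
           "permutation_mat ((n + m) choose k) P"
    and PC: "add_compound k (four_block_mat A (0\<^sub>m n m) (0\<^sub>m m n) B) =
             P * diag_block_mat (map (\<lambda>i. kron_sum (add_compound (k - i) A) (add_compound i B))
                                     [k - n..<min m k + 1]) * mat_inv P"
  shows
    "matrix_measure
        (\<lambda>x. N0 (vec (min m k - (k - n) + 1)
                 (\<lambda>j. lp_norm (p (k - n + j))
                        (vec_block (\<lambda>i. (n choose (k - i)) * (m choose i)) (k - n) (k - n + j)
                           (mat_inv P *\<^sub>v x)))))
        ((n + m) choose k)
        (add_compound k (four_block_mat A (0\<^sub>m n m) (0\<^sub>m m n) B))
     = Max ((\<lambda>i. matrix_measure (lp_norm (p i)) (n choose (k - i)) (add_compound (k - i) A)
                 + matrix_measure (lp_norm (p i)) (m choose i) (add_compound i B)) ` {k - n..min m k})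
   \<and> Min ((\<lambda>i. - matrix_measure (lp_norm (p i)) (n choose (k - i)) (- add_compound (k - i) A)
                 - matrix_measure (lp_norm (p i)) (m choose i) (- add_compound i B)) ` {k - n..min m k})
     \<le> matrix_measure
        (\<lambda>x. N0 (vec (min m k - (k - n) + 1)
                 (\<lambda>j. lp_norm (p (k - n + j))
                        (vec_block (\<lambda>i. (n choose (k - i)) * (m choose i)) (k - n) (k - n + j)
                           (mat_inv P *\<^sub>v x)))))
        ((n + m) choose k)
        (add_compound k (four_block_mat A (0\<^sub>m n m) (0\<^sub>m m n) B))"
proof -
  define lo where "lo = k - n"
  define hi where "hi = min m k"
  define s where "s = hi - lo + 1"
  define d where "d = (\<lambda>i. (n choose (k - i)) * (m choose i))"
  define F where "F = (\<lambda>i. kron_sum (add_compound (k - i) A) (add_compound i B))"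
  define C where "C = add_compound k (four_block_mat A (0\<^sub>m n m) (0\<^sub>m m n) B)"
  define Q where "Q = mat_inv P"
  define r where "r = (n + m) choose k"
  define muA where "muA = (\<lambda>i. matrix_measure (lp_norm (p i)) (n choose (k - i)) (add_compound (k - i) A))"
  define muB where "muB = (\<lambda>i. matrix_measure (lp_norm (p i)) (m choose i) (add_compound i B))"
  define nuA where "nuA = (\<lambda>i. matrix_measure (lp_norm (p i)) (n choose (k - i)) (- add_compound (k - i) A))"
  define nuB where "nuB = (\<lambda>i. matrix_measure (lp_norm (p i)) (m choose i) (- add_compound i B))"
  have lohi: "lo \<le> hi" using k unfolding lo_def hi_def by auto
  have los: "lo + s = Suc hi" unfolding s_def using lohi by simp
  have Iset: "{lo..<lo + s} = {lo..hi}" unfolding los by auto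
  have list: "[k - n..<min m k + 1] = [lo..<lo + s]"
  proof -
    have e: "min m k + 1 = lo + s" using los unfolding hi_def by simp
    show ?thesis by (simp only: e lo_def)
  qed
  have rng: "k - i \<le> n" "i \<le> m" if "i \<in> {lo..hi}" for i using that unfolding lo_def hi_def by auto
  have Ac: "add_compound (k - i) A \<in> carrier_mat (n choose (k - i)) (n choose (k - i))" for i
    using add_compound_carrier[OF A] .
  have Bc: "add_compound i B \<in> carrier_mat (m choose i) (m choose i)" for i
    using add_compound_carrier[OF B] .
  have nA: "0 < n choose (k - i)" and nB: "0 < m choose i" if "i \<in> {lo..hi}" for i
    using rng[OF that] by (auto simp: zero_less_binomial_iff)
  have pI: "1 \<le> p i" if "i \<in> {lo..hi}" for i using p that unfolding lo_def hi_def by auto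
  interpret BK: blk N0 p d lo s F
  proof
    show "monotonic_norm s N0" using N0 unfolding s_def lo_def hi_def .
    show "0 < s" unfolding s_def by simp
    show "\<forall>i\<in>{lo..<lo + s}. 1 \<le> p i" using pI unfolding Iset by auto
    show "\<forall>i\<in>{lo..<lo + s}. 0 < d i" using nA nB unfolding Iset d_def by auto
    show "\<forall>i\<in>{lo..<lo + s}. F i \<in> carrier_mat (d i) (d i)"
      unfolding F_def d_def using kron_sum_carrier[OF Ac Bc] by auto
  qed
  have roff: "off d lo (lo + s) = r"
    unfolding off_def Iset unfolding r_def d_def lo_def hi_def using vandermonde_range[OF k(2)] by simp
  have Dc: "BK.D \<in> carrier_mat r r" using BK.Dc unfolding roff .
  have Pc: "P \<in> carrier_mat r r" using P(1) unfolding r_def .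
  have Pinv: "P * Q = 1\<^sub>m r" "Q * P = 1\<^sub>m r" "Q \<in> carrier_mat r r"
    using perm_inverse[OF Pc P(2)[folded r_def]] unfolding Q_def by auto
  have PC': "C = P * BK.D * Q" unfolding C_def Q_def PC list F_def ..
  have LHS: "matrix_measure (\<lambda>x. N0 (vec s (\<lambda>j. lp_norm (p (lo + j)) (vec_block d lo (lo + j) (Q *\<^sub>v x))))) r C
      = matrix_measure BK.NB r BK.D"
  proof -
    have "(\<lambda>x. N0 (vec s (\<lambda>j. lp_norm (p (lo + j)) (vec_block d lo (lo + j) (Q *\<^sub>v x))))) = (\<lambda>x. BK.NB (Q *\<^sub>v x))"
      unfolding ND_def ..
    then show ?thesis using change_var[OF Pc Pinv(3) Pinv(1,2) Dc PC'] by simp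
  qed
  also have "\<dots> = Max ((\<lambda>i. matrix_measure (lp_norm (p i)) (d i) (F i)) ` {lo..<lo + s})"
    using BK.meas_blk unfolding roff .
  also have "\<dots> = Max ((\<lambda>i. muA i + muB i) ` {lo..hi})"
    unfolding Iset
  proof (intro arg_cong[of _ _ Max] image_cong refl)
    fix i assume i: "i \<in> {lo..hi}"
    show "matrix_measure (lp_norm (p i)) (d i) (F i) = muA i + muB i"
      unfolding d_def F_def muA_def muB_def by (rule meas_kron_sum[OF pI[OF i] nA[OF i] nB[OF i] Ac Bc])
  qed
  finally have main: "matrix_measure (\<lambda>x. N0 (vec s (\<lambda>j. lp_norm (p (lo + j)) (vec_block d lo (lo + j) (Q *\<^sub>v x))))) r C
      = Max ((\<lambda>i. muA i + muB i) ` {lo..hi})" .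
  have neg: "- nuA i - nuB i \<le> muA i + muB i" if i: "i \<in> {lo..hi}" for i
  proof -
    have "0 \<le> muA i + nuA i" unfolding muA_def nuA_def
      using vnorm.meas_neg[OF vnorm_lp[OF pI[OF i] nA[OF i]] Ac] .
    moreover have "0 \<le> muB i + nuB i" unfolding muB_def nuB_def
      using vnorm.meas_neg[OF vnorm_lp[OF pI[OF i] nB[OF i]] Bc] .
    ultimately show ?thesis by simp
  qed
  have lo_in: "lo \<in> {lo..hi}" using lohi by simp
  have "Min ((\<lambda>i. - nuA i - nuB i) ` {lo..hi}) \<le> - nuA lo - nuB lo" using lo_in by (intro Min_le) auto
  also have "\<dots> \<le> muA lo + muB lo" using neg[OF lo_in] .
  also have "\<dots> \<le> Max ((\<lambda>i. muA i + muB i) ` {lo..hi})" using lo_in by (intro Max_ge) auto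
  finally have second: "Min ((\<lambda>i. - nuA i - nuB i) ` {lo..hi}) \<le> Max ((\<lambda>i. muA i + muB i) ` {lo..hi})" .
  have res: "matrix_measure (\<lambda>x. N0 (vec s (\<lambda>j. lp_norm (p (lo + j)) (vec_block d lo (lo + j) (Q *\<^sub>v x))))) r C
      = Max ((\<lambda>i. muA i + muB i) ` {lo..hi})
    \<and> Min ((\<lambda>i. - nuA i - nuB i) ` {lo..hi})
      \<le> matrix_measure (\<lambda>x. N0 (vec s (\<lambda>j. lp_norm (p (lo + j)) (vec_block d lo (lo + j) (Q *\<^sub>v x))))) r C"
    using main second by simp
  show ?thesis using res unfolding s_def lo_def hi_def d_def Q_def r_def C_def muA_def muB_def nuA_def nuB_def .
qed

end
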